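(* Let $\tau$ be an arithmetic signature and let $k$ be a number. For each first-order $\tau_{k\text{-colors}}$-sentence $\phi$ in negation normal form in which no $C_i$ occurs inside the scope of a universal quantifier, there is a $\tau$-sentence $\phi'$ such that: (1) for all $\mathcal A \in \mathrm{STRUC}[\tau]$ we have $\mathcal A \models \phi'$ if and only if there is a $k$-coloring $\mathcal B$ of $\mathcal A$ with $\mathcal B \models \phi$; (2) $\mathrm{qr}(\phi') = \mathrm{qr}(\phi) + O(1)$; (3) $|\mathrm{bound}(\phi')| = |\mathrm{bound}(\phi)| + O(1)$, where $O(1)$ denotes a global constant independent of $\tau$ and $k$.
   Context: A signature $\tau$ is arithmetic if it contains $<$, ternary $\mathrm{add}$, ternary $\mathrm{mult}$, the unary function symbol $\mathrm{succ}$ and the constant $0$; $\mathrm{STRUC}[\tau]$ then contains only finite $\tau$-structures where $<$ is a linear order and $\mathrm{add},\mathrm{mult},\mathrm{succ},0$ have their natural meaning relative to this order (successor of the maximum is itself, $0$ is the minimum). For a number $k$, $\tau_{k\text{-colors}} = \tau \cup \{C_1,\dots,C_k\}$ with fresh unary relation symbols $C_i$. A $k$-coloring of a $\tau$-structure $\mathcal A$ is a $\tau_{k\text{-colors}}$-structure $\mathcal B$ whose $\tau$-restriction is $\mathcal A$ and in which $C_1^{\mathcal B},\dots,C_k^{\mathcal B}$ form a partition of the universe of $\mathcal A$ (color classes may be empty). A formula is in negation normal form if negations are applied only to atomic formulas. $\mathrm{qr}(\phi)$ is the quantifier rank and $\mathrm{bound}(\phi)$ the set of bound variables of $\phi$.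 *)

theory Defs
  imports Main
begin

text \<open>Function symbols (constants are
  0-ary function symbols): succ, 0, and arbitrary further ones.\<close>

datatype rsym = Less | Add | Mult | Col nat | RS nat
datatype fsym = Succ | Zero | FS nat

record sig =
  rsyms :: "rsym set"
  rarity :: "rsym \<Rightarrow> nat"
  fsyms :: "fsym set"
  farity :: "fsym \<Rightarrow> nat"

definition arith_sig :: "sig \<Rightarrow> bool" where
  "arith_sig \<tau> \<longleftrightarrow> finite (rsyms \<tau>) \<and> finite (fsyms \<tau>)
     \<and> Less \<in> rsyms \<tau> \<and> rarity \<tau> Less = 2
     \<and> Add \<in> rsyms \<tau> \<and> rarity \<tau> Add = 3
     \<and> Mult \<in> rsyms \<tau> \<and> rarity \<tau> Mult = 3
     \<and> Succ \<in> fsyms \<tau> \<and> farity \<tau> Succ = 1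
     \<and> Zero \<in> fsyms \<tau> \<and> farity \<tau> Zero = 0
     \<and> (\<forall>i. Col i \<notin> rsyms \<tau>)"

definition colors :: "sig \<Rightarrow> nat \<Rightarrow> sig" where
  "colors \<tau> k = \<tau>\<lparr> rsyms := rsyms \<tau> \<union> Col ` {1..k},
                  rarity := (\<lambda>r. case r of Col i \<Rightarrow> 1 | _ \<Rightarrow> rarity \<tau> r) \<rparr>"

datatype trm = Var nat | App fsym "trm list"

datatype fm = Eq trm trm | Rel rsym "trm list" | Neg fm | Conj fm fm | Disj fm fm
  | Ex nat fm | All nat fm

fun wf_trm :: "sig \<Rightarrow> trm \<Rightarrow> bool" where
  "wf_trm \<tau> (Var x) = True"
| "wf_trm \<tau> (App f ts) = (f \<in> fsyms \<tau> \<and> length ts = farity \<tau> f \<and> (\<forall>t\<in>set ts. wf_trm \<tau> t))"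

fun wf_fm :: "sig \<Rightarrow> fm \<Rightarrow> bool" where
  "wf_fm \<tau> (Eq s t) = (wf_trm \<tau> s \<and> wf_trm \<tau> t)"
| "wf_fm \<tau> (Rel r ts) = (r \<in> rsyms \<tau> \<and> length ts = rarity \<tau> r \<and> (\<forall>t\<in>set ts. wf_trm \<tau> t))"
| "wf_fm \<tau> (Neg \<phi>) = wf_fm \<tau> \<phi>"
| "wf_fm \<tau> (Conj \<phi> \<psi>) = (wf_fm \<tau> \<phi> \<and> wf_fm \<tau> \<psi>)"
| "wf_fm \<tau> (Disj \<phi> \<psi>) = (wf_fm \<tau> \<phi> \<and> wf_fm \<tau> \<psi>)"
| "wf_fm \<tau> (Ex x \<phi>) = wf_fm \<tau> \<phi>"
| "wf_fm \<tau> (All x \<phi>) = wf_fm \<tau> \<phi>"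

fun vars_trm :: "trm \<Rightarrow> nat set" where
  "vars_trm (Var x) = {x}"
| "vars_trm (App f ts) = (\<Union>t\<in>set ts. vars_trm t)"

fun free :: "fm \<Rightarrow> nat set" where
  "free (Eq s t) = vars_trm s \<union> vars_trm t"
| "free (Rel r ts) = (\<Union>t\<in>set ts. vars_trm t)"
| "free (Neg \<phi>) = free \<phi>"
| "free (Conj \<phi> \<psi>) = free \<phi> \<union> free \<psi>"
| "free (Disj \<phi> \<psi>) = free \<phi> \<union> free \<psi>"
| "free (Ex x \<phi>) = free \<phi> - {x}"
| "free (All x \<phi>) = free \<phi> - {x}"

definition sentence :: "fm \<Rightarrow> bool" where
  "sentence \<phi> \<longleftrightarrow> free \<phi> = {}"

fun is_atom :: "fm \<Rightarrow> bool" where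
  "is_atom (Eq s t) = True"
| "is_atom (Rel r ts) = True"
| "is_atom _ = False"

fun nnf :: "fm \<Rightarrow> bool" where
  "nnf (Eq s t) = True"
| "nnf (Rel r ts) = True"
| "nnf (Neg \<phi>) = is_atom \<phi>"
| "nnf (Conj \<phi> \<psi>) = (nnf \<phi> \<and> nnf \<psi>)"
| "nnf (Disj \<phi> \<psi>) = (nnf \<phi> \<and> nnf \<psi>)"
| "nnf (Ex x \<phi>) = nnf \<phi>"
| "nnf (All x \<phi>) = nnf \<phi>"

fun col_free :: "fm \<Rightarrow> bool" where
  "col_free (Eq s t) = True"
| "col_free (Rel r ts) = (\<forall>i. r \<noteq> Col i)"
| "col_free (Neg \<phi>) = col_free \<phi>"
| "col_free (Conj \<phi> \<psi>) = (col_free \<phi> \<and> col_free \<psi>)"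
| "col_free (Disj \<phi> \<psi>) = (col_free \<phi> \<and> col_free \<psi>)"
| "col_free (Ex x \<phi>) = col_free \<phi>"
| "col_free (All x \<phi>) = col_free \<phi>"

fun no_col_under_all :: "fm \<Rightarrow> bool" where
  "no_col_under_all (Eq s t) = True"
| "no_col_under_all (Rel r ts) = True"
| "no_col_under_all (Neg \<phi>) = no_col_under_all \<phi>"
| "no_col_under_all (Conj \<phi> \<psi>) = (no_col_under_all \<phi> \<and> no_col_under_all \<psi>)"
| "no_col_under_all (Disj \<phi> \<psi>) = (no_col_under_all \<phi> \<and> no_col_under_all \<psi>)"
| "no_col_under_all (Ex x \<phi>) = no_col_under_all \<phi>"
| "no_col_under_all (All x \<phi>) = col_free \<phi>"

fun qr :: "fm \<Rightarrow> nat" where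
  "qr (Eq s t) = 0"
| "qr (Rel r ts) = 0"
| "qr (Neg \<phi>) = qr \<phi>"
| "qr (Conj \<phi> \<psi>) = max (qr \<phi>) (qr \<psi>)"
| "qr (Disj \<phi> \<psi>) = max (qr \<phi>) (qr \<psi>)"
| "qr (Ex x \<phi>) = Suc (qr \<phi>)"
| "qr (All x \<phi>) = Suc (qr \<phi>)"

fun bound :: "fm \<Rightarrow> nat set" where
  "bound (Eq s t) = {}"
| "bound (Rel r ts) = {}"
| "bound (Neg \<phi>) = bound \<phi>"
| "bound (Conj \<phi> \<psi>) = bound \<phi> \<union> bound \<psi>"
| "bound (Disj \<phi> \<psi>) = bound \<phi> \<union> bound \<psi>"
| "bound (Ex x \<phi>) = insert x (bound \<phi>)"
| "bound (All x \<phi>) = insert x (bound \<phi>)"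

text \<open>Finite structures; universes are (w.l.o.g.) finite sets of naturals.\<close>
record struc =
  univ :: "nat set"
  rint :: "rsym \<Rightarrow> nat list \<Rightarrow> bool"
  fint :: "fsym \<Rightarrow> nat list \<Rightarrow> nat"

definition is_struc :: "sig \<Rightarrow> struc \<Rightarrow> bool" where
  "is_struc \<tau> A \<longleftrightarrow> finite (univ A) \<and> univ A \<noteq> {}
     \<and> (\<forall>f\<in>fsyms \<tau>. \<forall>as. length as = farity \<tau> f \<and> set as \<subseteq> univ A
            \<longrightarrow> fint A f as \<in> univ A)"

fun eval :: "struc \<Rightarrow> (nat \<Rightarrow> nat) \<Rightarrow> trm \<Rightarrow> nat" where
  "eval A s (Var x) = s x"
| "eval A s (App f ts) = fint A f (map (eval A s) ts)"

fun sat :: "struc \<Rightarrow> (nat \<Rightarrow> nat) \<Rightarrow> fm \<Rightarrow> bool" where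
  "sat A s (Eq t u) = (eval A s t = eval A s u)"
| "sat A s (Rel r ts) = rint A r (map (eval A s) ts)"
| "sat A s (Neg \<phi>) = (\<not> sat A s \<phi>)"
| "sat A s (Conj \<phi> \<psi>) = (sat A s \<phi> \<and> sat A s \<psi>)"
| "sat A s (Disj \<phi> \<psi>) = (sat A s \<phi> \<or> sat A s \<psi>)"
| "sat A s (Ex x \<phi>) = (\<exists>a\<in>univ A. sat A (s(x := a)) \<phi>)"
| "sat A s (All x \<phi>) = (\<forall>a\<in>univ A. sat A (s(x := a)) \<phi>)"

definition models :: "struc \<Rightarrow> fm \<Rightarrow> bool" where
  "models A \<phi> \<longleftrightarrow> (\<forall>s. (\<forall>x. s x \<in> univ A) \<longrightarrow> sat A s \<phi>)"

definition pos :: "struc \<Rightarrow> nat \<Rightarrow> nat" where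
  "pos A a = card {b \<in> univ A. rint A Less [b, a]}"

definition arith_struc :: "sig \<Rightarrow> struc \<Rightarrow> bool" where
  "arith_struc \<tau> A \<longleftrightarrow> is_struc \<tau> A
   \<and> (\<forall>a\<in>univ A. \<not> rint A Less [a, a])
   \<and> (\<forall>a\<in>univ A. \<forall>b\<in>univ A. \<forall>c\<in>univ A.
          rint A Less [a, b] \<and> rint A Less [b, c] \<longrightarrow> rint A Less [a, c])
   \<and> (\<forall>a\<in>univ A. \<forall>b\<in>univ A. a = b \<or> rint A Less [a, b] \<or> rint A Less [b, a])
   \<and> (\<forall>a\<in>univ A. \<forall>b\<in>univ A. \<forall>c\<in>univ A.
          rint A Add [a, b, c] \<longleftrightarrow> pos A a + pos A b = pos A c)
   \<and> (\<forall>a\<in>univ A. \<forall>b\<in>univ A. \<forall>c\<in>univ A.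
          rint A Mult [a, b, c] \<longleftrightarrow> pos A a * pos A b = pos A c)
   \<and> (\<forall>a\<in>univ A. (pos A a + 1 < card (univ A) \<longrightarrow> pos A (fint A Succ [a]) = pos A a + 1)
                 \<and> (pos A a + 1 = card (univ A) \<longrightarrow> fint A Succ [a] = a))
   \<and> pos A (fint A Zero []) = 0"

definition coloring :: "sig \<Rightarrow> nat \<Rightarrow> struc \<Rightarrow> struc \<Rightarrow> bool" where
  "coloring \<tau> k A B \<longleftrightarrow> is_struc (colors \<tau> k) B \<and> univ B = univ A
   \<and> (\<forall>r\<in>rsyms \<tau>. \<forall>as. length as = rarity \<tau> r \<and> set as \<subseteq> univ A
         \<longrightarrow> rint B r as = rint A r as)
   \<and> (\<forall>f\<in>fsyms \<tau>. \<forall>as. length as = farity \<tau> f \<and> set as \<subseteq> univ A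
         \<longrightarrow> fint B f as = fint A f as)
   \<and> (\<forall>a\<in>univ A. \<exists>!i. i \<in> {1..k} \<and> rint B (Col i) [a])"

end

theory Submission
  imports Defs "HOL-Number_Theory.Cong"
begin

lemma eval_upd: "x \<notin> vars_trm t \<Longrightarrow> eval A (s(x:=a)) t = eval A s t"
  by (induction t) (auto cong: map_cong)

lemma eval_cong: "(\<forall>x\<in>vars_trm t. s x = s' x) \<Longrightarrow> eval A s t = eval A s' t"
  by (induction t) (auto cong: map_cong)

lemma sat_cong: "(\<forall>x\<in>free \<phi>. s x = s' x) \<Longrightarrow> sat A s \<phi> = sat A s' \<phi>"
proof (induction \<phi> arbitrary: s s')
  case (Eq t u) then show ?case using eval_cong[of t s s' A] eval_cong[of u s s' A] by auto
next
  case (Rel r ts)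
  have "map (eval A s) ts = map (eval A s') ts"
    using Rel by (auto intro!: eval_cong)
  then show ?case by (metis sat.simps(2))
next
  case (Neg \<phi>)
  then show ?case by simp
next
  case (Conj \<phi>1 \<phi>2)
  have "sat A s \<phi>1 = sat A s' \<phi>1" using Conj.IH(1)[of s s'] Conj.prems by simp
  moreover have "sat A s \<phi>2 = sat A s' \<phi>2" using Conj.IH(2)[of s s'] Conj.prems by simp
  ultimately show ?case by simp
next
  case (Disj \<phi>1 \<phi>2)
  have "sat A s \<phi>1 = sat A s' \<phi>1" using Disj.IH(1)[of s s'] Disj.prems by simp
  moreover have "sat A s \<phi>2 = sat A s' \<phi>2" using Disj.IH(2)[of s s'] Disj.prems by simp
  ultimately show ?case by simp
next
  case (Ex x \<phi>)
  have "\<And>a. \<forall>y\<in>free \<phi>. (s(x:=a)) y = (s'(x:=a)) y" using Ex.prems by auto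
  then have "\<And>a. sat A (s(x:=a)) \<phi> = sat A (s'(x:=a)) \<phi>" using Ex.IH by blast
  then show ?case by simp
next
  case (All x \<phi>)
  have "\<And>a. \<forall>y\<in>free \<phi>. (s(x:=a)) y = (s'(x:=a)) y" using All.prems by auto
  then have "\<And>a. sat A (s(x:=a)) \<phi> = sat A (s'(x:=a)) \<phi>" using All.IH by blast
  then show ?case by simp
qed

definition colstruc :: "struc \<Rightarrow> (nat \<Rightarrow> nat) \<Rightarrow> struc" where
  "colstruc A col = A\<lparr>rint := (\<lambda>r as. case r of Col i \<Rightarrow> col (hd as) = i | _ \<Rightarrow> rint A r as)\<rparr>"

lemma colstruc_simps[simp]: "univ (colstruc A col) = univ A" "fint (colstruc A col) = fint A"
  "rint (colstruc A col) (Col i) as = (col (hd as) = i)"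
  "(\<forall>i. r \<noteq> Col i) \<Longrightarrow> rint (colstruc A col) r as = rint A r as"
  unfolding colstruc_def by (auto split: rsym.split)

lemma eval_colstruc0: "eval (colstruc A col) s t = eval A s t"
  by (induction t) (auto cong: map_cong)

lemma eval_colstruc[simp]: "eval (colstruc A col) = eval A"
  by (intro ext eval_colstruc0)

lemma sat_colstruc_free: "col_free \<phi> \<Longrightarrow> sat (colstruc A col) s \<phi> = sat A s \<phi>"
  by (induction \<phi> arbitrary: s) auto

lemma colors_simps[simp]: "fsyms (colors \<tau> k) = fsyms \<tau>" "farity (colors \<tau> k) = farity \<tau>"
  "rsyms (colors \<tau> k) = rsyms \<tau> \<union> Col ` {1..k}"
  "rarity (colors \<tau> k) (Col i) = 1"
  "(\<forall>i. r \<noteq> Col i) \<Longrightarrow> rarity (colors \<tau> k) r = rarity \<tau> r"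
  unfolding colors_def by (auto split: rsym.split)

lemma wf_trm_colors[simp]: "wf_trm (colors \<tau> k) t = wf_trm \<tau> t"
  by (induction t) auto

lemma eval_in_univ: "is_struc \<tau> A \<Longrightarrow> wf_trm \<tau> t \<Longrightarrow> \<forall>x. s x \<in> univ A \<Longrightarrow> eval A s t \<in> univ A"
proof (induction t)
  case (App f ts)
  have "set (map (eval A s) ts) \<subseteq> univ A" using App by auto
  moreover have "length (map (eval A s) ts) = farity \<tau> f" "f \<in> fsyms \<tau>" using App by auto
  ultimately show ?case using App.prems(1) unfolding is_struc_def by auto
qed auto

lemma eval_coloring: "coloring \<tau> k A B \<Longrightarrow> is_struc \<tau> A \<Longrightarrow> wf_trm \<tau> t \<Longrightarrow> \<forall>x. s x \<in> univ A
  \<Longrightarrow> eval B s t = eval A s t"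
proof (induction t)
  case (App f ts)
  have m: "map (eval B s) ts = map (eval A s) ts" using App by auto
  have "set (map (eval A s) ts) \<subseteq> univ A" using App.prems by (auto intro!: eval_in_univ)
  then have "fint B f (map (eval A s) ts) = fint A f (map (eval A s) ts)"
    using App.prems unfolding coloring_def by auto
  then show ?case using m by (metis eval.simps(2))
qed simp

lemma sat_coloring_free: "coloring \<tau> k A B \<Longrightarrow> is_struc \<tau> A \<Longrightarrow> col_free \<phi> \<Longrightarrow> wf_fm (colors \<tau> k) \<phi>
  \<Longrightarrow> \<forall>x. s x \<in> univ A \<Longrightarrow> sat B s \<phi> = sat A s \<phi>"
proof (induction \<phi> arbitrary: s)
  case (Eq t u) then show ?case by (simp add: eval_coloring)
next
  case (Rel r ts)
  have m: "map (eval B s) ts = map (eval A s) ts" using Rel by (auto simp: eval_coloring)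
  have "set (map (eval A s) ts) \<subseteq> univ A" using Rel.prems by (auto intro!: eval_in_univ)
  moreover have "r \<in> rsyms \<tau>" "length ts = rarity \<tau> r" using Rel by auto
  ultimately have "rint B r (map (eval A s) ts) = rint A r (map (eval A s) ts)"
    using Rel.prems unfolding coloring_def by auto
  then show ?case using m by (metis sat.simps(2))
next
  case (Ex x \<phi>)
  have u: "univ B = univ A" using Ex.prems unfolding coloring_def by auto
  have "sat B s (Ex x \<phi>) = (\<exists>a\<in>univ A. sat B (s(x:=a)) \<phi>)" using u by simp
  also have "... = (\<exists>a\<in>univ A. sat A (s(x:=a)) \<phi>)"
    using Ex.IH Ex.prems by (intro bex_cong refl) auto
  finally show ?case by simp
next
  case (All x \<phi>)
  have u: "univ B = univ A" using All.prems unfolding coloring_def by auto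
  have "sat B s (All x \<phi>) = (\<forall>a\<in>univ A. sat B (s(x:=a)) \<phi>)" using u by simp
  also have "... = (\<forall>a\<in>univ A. sat A (s(x:=a)) \<phi>)"
    using All.IH All.prems by (intro ball_cong refl) auto
  finally show ?case by simp
qed auto

fun ncol :: "fm \<Rightarrow> nat" where
  "ncol (Eq s t) = 0"
| "ncol (Rel r ts) = (case r of Col i \<Rightarrow> 1 | _ \<Rightarrow> 0)"
| "ncol (Neg \<phi>) = ncol \<phi>"
| "ncol (Conj \<phi> \<psi>) = ncol \<phi> + ncol \<psi>"
| "ncol (Disj \<phi> \<psi>) = ncol \<phi> + ncol \<psi>"
| "ncol (Ex x \<phi>) = ncol \<phi>"
| "ncol (All x \<phi>) = ncol \<phi>"

lemma support:
  assumes B: "coloring \<tau> k A B" and A: "is_struc \<tau> A" and nc: "\<forall>i. Col i \<notin> rsyms \<tau>"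
  shows "nnf \<phi> \<Longrightarrow> no_col_under_all \<phi> \<Longrightarrow> wf_fm (colors \<tau> k) \<phi> \<Longrightarrow> \<forall>x. s x \<in> univ A \<Longrightarrow> sat B s \<phi> \<Longrightarrow>
    \<exists>S. finite S \<and> S \<subseteq> univ A \<and> card S \<le> ncol \<phi> \<and>
      (\<forall>col. (\<forall>x\<in>S. \<forall>i\<in>{1..k}. rint B (Col i) [x] \<longleftrightarrow> col x = i) \<longrightarrow> sat (colstruc A col) s \<phi>)"
proof (induction \<phi> arbitrary: s)
  case (Eq t u)
  then have "sat A s (Eq t u)" using sat_coloring_free[OF B A, of "Eq t u" s] by simp
  then show ?case using sat_colstruc_free[of "Eq t u"] by (intro exI[of _ "{}"]) simp
next
  case (Rel r ts)
  show ?case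
  proof (cases "\<exists>i. r = Col i")
    case True
    then obtain i where r: "r = Col i" by auto
    from Rel.prems r nc have i: "i \<in> {1..k}" by auto
    have "length ts = 1" using Rel.prems r by simp
    then obtain t where ts: "ts = [t]" by (metis One_nat_def length_0_conv length_Suc_conv)
    have wt: "wf_trm \<tau> t" using Rel.prems r ts by simp
    have e: "eval B s t = eval A s t" using eval_coloring[OF B A wt] Rel.prems by simp
    have ein: "eval A s t \<in> univ A" using eval_in_univ[OF A wt] Rel.prems by simp
    have rb: "rint B (Col i) [eval A s t]" using Rel.prems r ts e by simp
    have "\<forall>col. (\<forall>x\<in>{eval A s t}. \<forall>i\<in>{1..k}. rint B (Col i) [x] \<longleftrightarrow> col x = i) \<longrightarrow> sat (colstruc A col) s (Rel r ts)"
    proof (intro allI impI)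
      fix col assume h: "\<forall>x\<in>{eval A s t}. \<forall>i\<in>{1..k}. rint B (Col i) [x] \<longleftrightarrow> col x = i"
      then have "col (eval A s t) = i" using i rb by blast
      then show "sat (colstruc A col) s (Rel r ts)" using r ts by simp
    qed
    then show ?thesis using ein r by (intro exI[of _ "{eval A s t}"]) simp
  next
    case False
    then have "sat A s (Rel r ts)" using sat_coloring_free[OF B A, of "Rel r ts" s] Rel.prems by simp
    then show ?thesis using sat_colstruc_free[of "Rel r ts"] False by (intro exI[of _ "{}"]) simp
  qed
next
  case (Neg \<psi>)
  show ?case
  proof (cases "\<exists>i ts. \<psi> = Rel (Col i) ts")
    case True
    then obtain i ts where r: "\<psi> = Rel (Col i) ts" by auto
    from Neg.prems r nc have i: "i \<in> {1..k}" by auto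
    have "length ts = 1" using Neg.prems r by simp
    then obtain t where ts: "ts = [t]" by (metis One_nat_def length_0_conv length_Suc_conv)
    have wt: "wf_trm \<tau> t" using Neg.prems r ts by simp
    have e: "eval B s t = eval A s t" using eval_coloring[OF B A wt] Neg.prems by simp
    have ein: "eval A s t \<in> univ A" using eval_in_univ[OF A wt] Neg.prems by simp
    have rb: "\<not> rint B (Col i) [eval A s t]" using Neg.prems r ts e by simp
    have "\<forall>col. (\<forall>x\<in>{eval A s t}. \<forall>i\<in>{1..k}. rint B (Col i) [x] \<longleftrightarrow> col x = i) \<longrightarrow> sat (colstruc A col) s (Neg \<psi>)"
    proof (intro allI impI)
      fix col assume h: "\<forall>x\<in>{eval A s t}. \<forall>i\<in>{1..k}. rint B (Col i) [x] \<longleftrightarrow> col x = i"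
      then have "col (eval A s t) \<noteq> i" using i rb by blast
      then show "sat (colstruc A col) s (Neg \<psi>)" using r ts by simp
    qed
    then show ?thesis using ein r by (intro exI[of _ "{eval A s t}"]) simp
  next
    case False
    have cf: "col_free \<psi>" using False Neg.prems by (cases \<psi>) auto
    then have "sat A s (Neg \<psi>)" using sat_coloring_free[OF B A, of "Neg \<psi>" s] Neg.prems by simp
    then show ?thesis using sat_colstruc_free[of "Neg \<psi>"] cf by (intro exI[of _ "{}"]) simp
  qed
next
  case (Conj \<phi>1 \<phi>2)
  have "\<exists>S. finite S \<and> S \<subseteq> univ A \<and> card S \<le> ncol \<phi>1 \<and>
      (\<forall>col. (\<forall>x\<in>S. \<forall>i\<in>{1..k}. rint B (Col i) [x] \<longleftrightarrow> col x = i) \<longrightarrow> sat (colstruc A col) s \<phi>1)"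
    by (rule Conj.IH(1)) (use Conj.prems in simp_all)
  then obtain S1 where S1: "finite S1 \<and> S1 \<subseteq> univ A \<and> card S1 \<le> ncol \<phi>1 \<and>
      (\<forall>col. (\<forall>x\<in>S1. \<forall>i\<in>{1..k}. rint B (Col i) [x] \<longleftrightarrow> col x = i) \<longrightarrow> sat (colstruc A col) s \<phi>1)"
    by blast
  have "\<exists>S. finite S \<and> S \<subseteq> univ A \<and> card S \<le> ncol \<phi>2 \<and>
      (\<forall>col. (\<forall>x\<in>S. \<forall>i\<in>{1..k}. rint B (Col i) [x] \<longleftrightarrow> col x = i) \<longrightarrow> sat (colstruc A col) s \<phi>2)"
    by (rule Conj.IH(2)) (use Conj.prems in simp_all)
  then obtain S2 where S2: "finite S2 \<and> S2 \<subseteq> univ A \<and> card S2 \<le> ncol \<phi>2 \<and>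
      (\<forall>col. (\<forall>x\<in>S2. \<forall>i\<in>{1..k}. rint B (Col i) [x] \<longleftrightarrow> col x = i) \<longrightarrow> sat (colstruc A col) s \<phi>2)"
    by blast
  have "card (S1 \<union> S2) \<le> ncol (Conj \<phi>1 \<phi>2)"
    using card_Un_le[of S1 S2] S1 S2 by simp
  then show ?case using S1 S2 by (intro exI[of _ "S1 \<union> S2"]) auto
next
  case (Disj \<phi>1 \<phi>2)
  show ?case
  proof (cases "sat B s \<phi>1")
    case True
    have "\<exists>S. finite S \<and> S \<subseteq> univ A \<and> card S \<le> ncol \<phi>1 \<and>
      (\<forall>col. (\<forall>x\<in>S. \<forall>i\<in>{1..k}. rint B (Col i) [x] \<longleftrightarrow> col x = i) \<longrightarrow> sat (colstruc A col) s \<phi>1)"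
      by (rule Disj.IH(1)) (use Disj.prems True in simp_all)
    then show ?thesis by auto
  next
    case False
    have "\<exists>S. finite S \<and> S \<subseteq> univ A \<and> card S \<le> ncol \<phi>2 \<and>
      (\<forall>col. (\<forall>x\<in>S. \<forall>i\<in>{1..k}. rint B (Col i) [x] \<longleftrightarrow> col x = i) \<longrightarrow> sat (colstruc A col) s \<phi>2)"
      by (rule Disj.IH(2)) (use Disj.prems False in simp_all)
    then show ?thesis by auto
  qed
next
  case (Ex x \<psi>)
  have u: "univ B = univ A" using B unfolding coloring_def by auto
  obtain a where a: "a \<in> univ A" "sat B (s(x:=a)) \<psi>" using Ex.prems u by auto
  have h: "\<forall>y. (s(x:=a)) y \<in> univ A" using Ex.prems a by simp
  have "\<exists>S. finite S \<and> S \<subseteq> univ A \<and> card S \<le> ncol \<psi> \<and>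
      (\<forall>col. (\<forall>x\<in>S. \<forall>i\<in>{1..k}. rint B (Col i) [x] \<longleftrightarrow> col x = i) \<longrightarrow> sat (colstruc A col) (s(x:=a)) \<psi>)"
    using Ex.IH[of "s(x:=a)", OF _ _ _ h a(2)] Ex.prems by (simp add: fun_upd_def)
  then obtain S where S: "finite S \<and> S \<subseteq> univ A \<and> card S \<le> ncol \<psi> \<and>
      (\<forall>col. (\<forall>x\<in>S. \<forall>i\<in>{1..k}. rint B (Col i) [x] \<longleftrightarrow> col x = i) \<longrightarrow> sat (colstruc A col) (s(x:=a)) \<psi>)"
    by blast
  then show ?case using a by (intro exI[of _ S]) auto
next
  case (All x \<psi>)
  have cf: "col_free (All x \<psi>)" using All.prems by simp
  then have "sat A s (All x \<psi>)" using sat_coloring_free[OF B A, of "All x \<psi>" s] All.prems by simp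
  then show ?case using sat_colstruc_free[OF cf] by (intro exI[of _ "{}"]) simp
qed

fun numt :: "nat \<Rightarrow> trm" where
  "numt 0 = App Zero []"
| "numt (Suc j) = App Succ [numt j]"

lemma vars_numt[simp]: "vars_trm (numt j) = {}"
  by (induction j) auto

lemma wf_numt: "arith_sig \<tau> \<Longrightarrow> wf_trm \<tau> (numt j)"
  by (induction j) (auto simp: arith_sig_def)

lemma eval_numt_indep: "eval A s (numt j) = eval A s' (numt j)"
  by (rule eval_cong) simp

context
  fixes \<tau> A
  assumes AS: "arith_struc \<tau> A" and SG: "arith_sig \<tau>"
begin

lemma is_str: "is_struc \<tau> A" using AS unfolding arith_struc_def by auto
lemma finU: "finite (univ A)" using is_str unfolding is_struc_def by auto
lemma neU: "univ A \<noteq> {}" using is_str unfolding is_struc_def by auto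
lemma irr: "a \<in> univ A \<Longrightarrow> \<not> rint A Less [a,a]" using AS unfolding arith_struc_def by auto
lemma trans_less: "a \<in> univ A \<Longrightarrow> b \<in> univ A \<Longrightarrow> c \<in> univ A \<Longrightarrow> rint A Less [a,b] \<Longrightarrow> rint A Less [b,c] \<Longrightarrow> rint A Less [a,c]"
  using AS unfolding arith_struc_def by blast
lemma total_less: "a \<in> univ A \<Longrightarrow> b \<in> univ A \<Longrightarrow> a = b \<or> rint A Less [a,b] \<or> rint A Less [b,a]"
  using AS unfolding arith_struc_def by blast

lemma pos_mono: assumes "a \<in> univ A" "b \<in> univ A" "rint A Less [a,b]" shows "pos A a < pos A b"
proof -
  have "{c \<in> univ A. rint A Less [c, a]} \<subset> {c \<in> univ A. rint A Less [c, b]}"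
  proof
    show "{c \<in> univ A. rint A Less [c, a]} \<subseteq> {c \<in> univ A. rint A Less [c, b]}"
      using trans_less assms by blast
    show "{c \<in> univ A. rint A Less [c, a]} \<noteq> {c \<in> univ A. rint A Less [c, b]}"
      using assms irr by blast
  qed
  then show ?thesis unfolding pos_def using finU by (intro psubset_card_mono) auto
qed

lemma less_iff: "a \<in> univ A \<Longrightarrow> b \<in> univ A \<Longrightarrow> rint A Less [a,b] \<longleftrightarrow> pos A a < pos A b"
  by (metis less_asym' pos_mono total_less less_irrefl)

lemma pos_inj: "a \<in> univ A \<Longrightarrow> b \<in> univ A \<Longrightarrow> pos A a = pos A b \<Longrightarrow> a = b"
  by (metis pos_mono total_less less_irrefl)

lemma pos_lt_n: assumes "a \<in> univ A" shows "pos A a < card (univ A)"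
proof -
  have "{c \<in> univ A. rint A Less [c, a]} \<subseteq> univ A - {a}" using irr assms by auto
  then have "pos A a \<le> card (univ A - {a})" unfolding pos_def using finU by (intro card_mono) auto
  also have "\<dots> < card (univ A)" by (rule card_Diff1_less[OF finU assms])
  finally show ?thesis .
qed

lemma pos_surj: assumes "p < card (univ A)" shows "\<exists>a\<in>univ A. pos A a = p"
proof -
  have inj: "inj_on (pos A) (univ A)" using pos_inj by (auto intro: inj_onI)
  have sub: "pos A ` univ A \<subseteq> {..<card (univ A)}" using pos_lt_n by auto
  have "card (pos A ` univ A) = card {..<card (univ A)}" using card_image[OF inj] by simp
  then have "pos A ` univ A = {..<card (univ A)}" using sub by (intro card_subset_eq) auto
  then have "p \<in> pos A ` univ A" using assms by simp
  then show ?thesis by blast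
qed

lemma add_iff: "a \<in> univ A \<Longrightarrow> b \<in> univ A \<Longrightarrow> c \<in> univ A \<Longrightarrow> rint A Add [a,b,c] \<longleftrightarrow> pos A a + pos A b = pos A c"
  using AS unfolding arith_struc_def by blast
lemma mult_iff: "a \<in> univ A \<Longrightarrow> b \<in> univ A \<Longrightarrow> c \<in> univ A \<Longrightarrow> rint A Mult [a,b,c] \<longleftrightarrow> pos A a * pos A b = pos A c"
  using AS unfolding arith_struc_def by blast

lemma succ_in: "a \<in> univ A \<Longrightarrow> fint A Succ [a] \<in> univ A"
  using is_str SG unfolding is_struc_def arith_sig_def by auto
lemma zero_in: "fint A Zero [] \<in> univ A"
  using is_str SG unfolding is_struc_def arith_sig_def by auto
lemma succ_pos: "a \<in> univ A \<Longrightarrow> pos A a + 1 < card (univ A) \<Longrightarrow> pos A (fint A Succ [a]) = pos A a + 1"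
  using AS unfolding arith_struc_def by blast
lemma succ_max: "a \<in> univ A \<Longrightarrow> pos A a + 1 = card (univ A) \<Longrightarrow> fint A Succ [a] = a"
  using AS unfolding arith_struc_def by blast
lemma zero_pos: "pos A (fint A Zero []) = 0"
  using AS unfolding arith_struc_def by blast

lemma eval_numt: "eval A s (numt j) \<in> univ A \<and> pos A (eval A s (numt j)) = min j (card (univ A) - 1)"
proof (induction j)
  case 0 then show ?case using zero_in zero_pos by simp
next
  case (Suc j)
  let ?a = "eval A s (numt j)"
  have a: "?a \<in> univ A" using Suc by simp
  have lt: "pos A ?a < card (univ A)" using pos_lt_n[OF a] .
  show ?case
  proof (cases "pos A ?a + 1 < card (univ A)")
    case True
    then show ?thesis using succ_pos[OF a True] succ_in[OF a] Suc by auto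
  next
    case False
    then have "pos A ?a + 1 = card (univ A)" using lt by simp
    then show ?thesis using succ_max[OF a] a Suc by auto
  qed
qed

end

definition Tru :: fm where "Tru = Eq (App Zero []) (App Zero [])"
definition Fls :: fm where "Fls = Neg Tru"
definition Disjs :: "fm list \<Rightarrow> fm" where "Disjs fs = foldr Disj fs Fls"
definition Conjs :: "fm list \<Rightarrow> fm" where "Conjs fs = foldr Conj fs Tru"

lemma sat_Tru[simp]: "sat A s Tru" by (simp add: Tru_def)
lemma sat_Fls[simp]: "\<not> sat A s Fls" by (simp add: Fls_def)
lemma free_Tru[simp]: "free Tru = {}" "free Fls = {}" by (auto simp: Tru_def Fls_def)
lemma bound_Tru[simp]: "bound Tru = {}" "bound Fls = {}" by (auto simp: Tru_def Fls_def)
lemma qr_Tru[simp]: "qr Tru = 0" "qr Fls = 0" by (auto simp: Tru_def Fls_def)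
lemma wf_Tru: "arith_sig \<tau> \<Longrightarrow> wf_fm \<tau> Tru" "arith_sig \<tau> \<Longrightarrow> wf_fm \<tau> Fls"
  by (auto simp: Tru_def Fls_def arith_sig_def)

lemma sat_Disjs[simp]: "sat A s (Disjs fs) = (\<exists>f\<in>set fs. sat A s f)"
  by (induction fs) (auto simp: Disjs_def)
lemma sat_Conjs[simp]: "sat A s (Conjs fs) = (\<forall>f\<in>set fs. sat A s f)"
  by (induction fs) (auto simp: Conjs_def)
lemma free_Disjs[simp]: "free (Disjs fs) = (\<Union>f\<in>set fs. free f)"
  by (induction fs) (auto simp: Disjs_def)
lemma free_Conjs[simp]: "free (Conjs fs) = (\<Union>f\<in>set fs. free f)"
  by (induction fs) (auto simp: Conjs_def)
lemma bound_Disjs[simp]: "bound (Disjs fs) = (\<Union>f\<in>set fs. bound f)"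
  by (induction fs) (auto simp: Disjs_def)
lemma bound_Conjs[simp]: "bound (Conjs fs) = (\<Union>f\<in>set fs. bound f)"
  by (induction fs) (auto simp: Conjs_def)
lemma wf_Disjs: "arith_sig \<tau> \<Longrightarrow> \<forall>f\<in>set fs. wf_fm \<tau> f \<Longrightarrow> wf_fm \<tau> (Disjs fs)"
  by (induction fs) (auto simp: Disjs_def wf_Tru)
lemma wf_Conjs: "arith_sig \<tau> \<Longrightarrow> \<forall>f\<in>set fs. wf_fm \<tau> f \<Longrightarrow> wf_fm \<tau> (Conjs fs)"
  by (induction fs) (auto simp: Conjs_def wf_Tru)
lemma qr_Disjs: "\<forall>f\<in>set fs. qr f \<le> K \<Longrightarrow> qr (Disjs fs) \<le> K"
  by (induction fs) (auto simp: Disjs_def)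
lemma qr_Conjs: "\<forall>f\<in>set fs. qr f \<le> K \<Longrightarrow> qr (Conjs fs) \<le> K"
  by (induction fs) (auto simp: Conjs_def)
lemma qr_Disjs_ge: "f \<in> set fs \<Longrightarrow> qr f \<le> qr (Disjs fs)"
  by (induction fs) (auto simp: Disjs_def)

fun rc :: "(nat \<Rightarrow> trm \<Rightarrow> fm) \<Rightarrow> fm \<Rightarrow> fm" where
  "rc F (Eq s t) = Eq s t"
| "rc F (Rel r ts) = (case r of Col i \<Rightarrow> F i (hd ts) | _ \<Rightarrow> Rel r ts)"
| "rc F (Neg \<phi>) = Neg (rc F \<phi>)"
| "rc F (Conj \<phi> \<psi>) = Conj (rc F \<phi>) (rc F \<psi>)"
| "rc F (Disj \<phi> \<psi>) = Disj (rc F \<phi>) (rc F \<psi>)"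
| "rc F (Ex x \<phi>) = Ex x (rc F \<phi>)"
| "rc F (All x \<phi>) = All x (rc F \<phi>)"

fun vars_fm :: "fm \<Rightarrow> nat set" where
  "vars_fm (Eq s t) = vars_trm s \<union> vars_trm t"
| "vars_fm (Rel r ts) = (\<Union>t\<in>set ts. vars_trm t)"
| "vars_fm (Neg \<phi>) = vars_fm \<phi>"
| "vars_fm (Conj \<phi> \<psi>) = vars_fm \<phi> \<union> vars_fm \<psi>"
| "vars_fm (Disj \<phi> \<psi>) = vars_fm \<phi> \<union> vars_fm \<psi>"
| "vars_fm (Ex x \<phi>) = insert x (vars_fm \<phi>)"
| "vars_fm (All x \<phi>) = insert x (vars_fm \<phi>)"

lemma finite_vars_trm: "finite (vars_trm t)" by (induction t) auto
lemma finite_vars_fm: "finite (vars_fm \<phi>)" by (induction \<phi>) (auto simp: finite_vars_trm)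
lemma bound_sub_vars: "bound \<phi> \<subseteq> vars_fm \<phi>" by (induction \<phi>) auto
lemma finite_bound: "finite (bound \<phi>)" using finite_subset[OF bound_sub_vars finite_vars_fm] .

lemma sat_rc:
  assumes F: "\<And>i t s. (\<forall>v\<in>P. s v = s0 v) \<Longrightarrow> (\<forall>y\<in>vars_trm t. y < V) \<Longrightarrow> sat A s (F i t) = (col (eval A s t) = i)"
  and P: "\<forall>v\<in>P. V \<le> v"
  shows "wf_fm (colors \<tau> k) \<phi> \<Longrightarrow> (\<forall>y\<in>vars_fm \<phi>. y < V) \<Longrightarrow> (\<forall>v\<in>P. s v = s0 v) \<Longrightarrow>
    sat A s (rc F \<phi>) = sat (colstruc A col) s \<phi>"
proof (induction \<phi> arbitrary: s)
  case (Rel r ts)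
  show ?case
  proof (cases "\<exists>i. r = Col i")
    case True
    then obtain i where r: "r = Col i" by auto
    have "length ts = 1" using Rel.prems r by simp
    then obtain t where ts: "ts = [t]" by (metis One_nat_def length_0_conv length_Suc_conv)
    have "sat A s (F i t) = (col (eval A s t) = i)" using F Rel.prems ts by auto
    then show ?thesis using r ts by simp
  next
    case False
    then have "rc F (Rel r ts) = Rel r ts" by (cases r) auto
    then show ?thesis using False by simp
  qed
next
  case (Ex x \<phi>)
  have "x \<notin> P" using Ex.prems P by fastforce
  then have "\<And>a. \<forall>v\<in>P. (s(x:=a)) v = s0 v" using Ex.prems by auto
  then show ?case using Ex.IH Ex.prems by simp
next
  case (All x \<phi>)
  have "x \<notin> P" using All.prems P by fastforce
  then have "\<And>a. \<forall>v\<in>P. (s(x:=a)) v = s0 v" using All.prems by auto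
  then show ?case using All.IH All.prems by simp
qed auto

lemma wf_rc: "wf_fm (colors \<tau> k) \<phi> \<Longrightarrow> (\<forall>i t. wf_trm \<tau> t \<longrightarrow> wf_fm \<tau> (F i t)) \<Longrightarrow> wf_fm \<tau> (rc F \<phi>)"
proof (induction \<phi>)
  case (Rel r ts)
  show ?case
  proof (cases "\<exists>i. r = Col i")
    case True
    then obtain i where r: "r = Col i" by auto
    have "length ts = 1" using Rel.prems r by simp
    then obtain t where ts: "ts = [t]" by (metis One_nat_def length_0_conv length_Suc_conv)
    then show ?thesis using Rel.prems r by simp
  next
    case False
    then have "rc F (Rel r ts) = Rel r ts" by (cases r) auto
    then show ?thesis using False Rel.prems by auto
  qed
qed auto

lemma free_rc: "wf_fm (colors \<tau> k) \<phi> \<Longrightarrow> (\<forall>i t. free (F i t) \<subseteq> vars_trm t \<union> P) \<Longrightarrow> P \<inter> bound \<phi> = {}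
  \<Longrightarrow> free (rc F \<phi>) \<subseteq> free \<phi> \<union> P"
proof (induction \<phi>)
  case (Rel r ts)
  show ?case
  proof (cases "\<exists>i. r = Col i")
    case True
    then obtain i where r: "r = Col i" by auto
    have "length ts = 1" using Rel.prems r by simp
    then obtain t where ts: "ts = [t]" by (metis One_nat_def length_0_conv length_Suc_conv)
    then show ?thesis using Rel.prems r by auto
  next
    case False
    then have "rc F (Rel r ts) = Rel r ts" by (cases r) auto
    then show ?thesis by auto
  qed
next
  case (Conj \<phi>1 \<phi>2)
  have "P \<inter> bound \<phi>1 = {}" "P \<inter> bound \<phi>2 = {}" using Conj.prems by auto
  then show ?case using Conj by auto
next
  case (Disj \<phi>1 \<phi>2)
  have "P \<inter> bound \<phi>1 = {}" "P \<inter> bound \<phi>2 = {}" using Disj.prems by auto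
  then show ?case using Disj by auto
next
  case (Ex x \<phi>) then show ?case by auto
next
  case (All x \<phi>) then show ?case by auto
qed auto

lemma qr_rc: "(\<forall>i t. qr (F i t) \<le> K) \<Longrightarrow> qr (rc F \<phi>) \<le> qr \<phi> + K"
proof (induction \<phi>)
  case (Rel r ts) then show ?case by (cases r) auto
qed auto

lemma qr_rc_ge: "qr \<phi> \<le> qr (rc F \<phi>)"
  by (induction \<phi>) auto

lemma bound_rc: "(\<forall>i t. bound (F i t) \<subseteq> BF) \<Longrightarrow> bound (rc F \<phi>) \<subseteq> bound \<phi> \<union> BF"
proof (induction \<phi>)
  case (Rel r ts) then show ?case by (cases r) auto
qed auto

lemma bound_rc_ge: "bound \<phi> \<subseteq> bound (rc F \<phi>)"
  by (induction \<phi>) auto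

definition Fsel :: "(nat \<Rightarrow> trm \<Rightarrow> fm) \<Rightarrow> nat \<Rightarrow> nat list \<Rightarrow> nat \<Rightarrow> trm \<Rightarrow> fm" where
  "Fsel \<theta> M g i t = Disjs (map (\<lambda>j. Conj (\<theta> j t) (Conjs (map (\<lambda>j'. Neg (\<theta> j' t)) [1..<j])))
       (filter (\<lambda>j. g!j = i) [1..<Suc M])
     @ (if g!0 = i then [Conjs (map (\<lambda>j. Neg (\<theta> j t)) [1..<Suc M])] else []))"

definition colf :: "(nat \<Rightarrow> nat \<Rightarrow> bool) \<Rightarrow> nat \<Rightarrow> nat list \<Rightarrow> nat \<Rightarrow> nat" where
  "colf \<Theta> M g a = (if \<exists>j\<in>{1..M}. \<Theta> j a then g ! (LEAST j. j \<in> {1..M} \<and> \<Theta> j a) else g ! 0)"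

lemma sat_Fsel_aux:
  "sat A s (Fsel \<theta> M g i t) = ((\<exists>j\<in>{1..M}. g!j = i \<and> sat A s (\<theta> j t) \<and> (\<forall>j'\<in>{1..<j}. \<not> sat A s (\<theta> j' t)))
     \<or> (g!0 = i \<and> (\<forall>j\<in>{1..M}. \<not> sat A s (\<theta> j t))))"
proof -
  have e1: "(\<exists>f\<in>set (map (\<lambda>j. Conj (\<theta> j t) (Conjs (map (\<lambda>j'. Neg (\<theta> j' t)) [1..<j])))
       (filter (\<lambda>j. g!j = i) [1..<Suc M])). sat A s f)
     = (\<exists>j\<in>{1..M}. g!j = i \<and> sat A s (\<theta> j t) \<and> (\<forall>j'\<in>{1..<j}. \<not> sat A s (\<theta> j' t)))"
  proof
    assume "\<exists>f\<in>set (map (\<lambda>j. Conj (\<theta> j t) (Conjs (map (\<lambda>j'. Neg (\<theta> j' t)) [1..<j])))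
       (filter (\<lambda>j. g!j = i) [1..<Suc M])). sat A s f"
    then show "\<exists>j\<in>{1..M}. g!j = i \<and> sat A s (\<theta> j t) \<and> (\<forall>j'\<in>{1..<j}. \<not> sat A s (\<theta> j' t))"
      by (auto simp del: upt_Suc)
  next
    assume "\<exists>j\<in>{1..M}. g!j = i \<and> sat A s (\<theta> j t) \<and> (\<forall>j'\<in>{1..<j}. \<not> sat A s (\<theta> j' t))"
    then obtain j where j: "j\<in>{1..M}" "g!j = i" "sat A s (\<theta> j t)" "\<forall>j'\<in>{1..<j}. \<not> sat A s (\<theta> j' t)"
      by blast
    show "\<exists>f\<in>set (map (\<lambda>j. Conj (\<theta> j t) (Conjs (map (\<lambda>j'. Neg (\<theta> j' t)) [1..<j])))
       (filter (\<lambda>j. g!j = i) [1..<Suc M])). sat A s f"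
      by (rule bexI[of _ "Conj (\<theta> j t) (Conjs (map (\<lambda>j'. Neg (\<theta> j' t)) [1..<j]))"])
        (use j in \<open>auto simp del: upt_Suc\<close>)
  qed
  have e2: "(\<exists>f\<in>set (if g!0 = i then [Conjs (map (\<lambda>j. Neg (\<theta> j t)) [1..<Suc M])] else []). sat A s f)
     = (g!0 = i \<and> (\<forall>j\<in>{1..M}. \<not> sat A s (\<theta> j t)))"
    by (auto simp del: upt_Suc)
  show ?thesis unfolding Fsel_def sat_Disjs set_append bex_Un e1 e2 ..
qed

lemma sat_Fsel: assumes "\<And>j. sat A s (\<theta> j t) = \<Theta> j (eval A s t)"
  shows "sat A s (Fsel \<theta> M g i t) = (colf \<Theta> M g (eval A s t) = i)"
proof -
  define a where "a = eval A s t"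
  have L: "sat A s (Fsel \<theta> M g i t) = ((\<exists>j\<in>{1..M}. g!j = i \<and> \<Theta> j a \<and> (\<forall>j'\<in>{1..<j}. \<not> \<Theta> j' a))
     \<or> (g!0 = i \<and> (\<forall>j\<in>{1..M}. \<not> \<Theta> j a)))"
    unfolding sat_Fsel_aux assms a_def by simp
  show ?thesis
  proof (cases "\<exists>j\<in>{1..M}. \<Theta> j a")
    case True
    define j0 where "j0 = (LEAST j. j \<in> {1..M} \<and> \<Theta> j a)"
    have j0: "j0 \<in> {1..M} \<and> \<Theta> j0 a" unfolding j0_def using True by (metis (mono_tags, lifting) LeastI)
    have min: "\<And>j. j \<in> {1..M} \<and> \<Theta> j a \<Longrightarrow> j0 \<le> j" unfolding j0_def by (rule Least_le)
    have c: "colf \<Theta> M g a = g ! j0" unfolding colf_def j0_def using True by simp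
    have "(\<exists>j\<in>{1..M}. g!j = i \<and> \<Theta> j a \<and> (\<forall>j'\<in>{1..<j}. \<not> \<Theta> j' a)) = (g ! j0 = i)"
    proof
      assume "\<exists>j\<in>{1..M}. g!j = i \<and> \<Theta> j a \<and> (\<forall>j'\<in>{1..<j}. \<not> \<Theta> j' a)"
      then obtain j where j: "j\<in>{1..M}" "g!j = i" "\<Theta> j a" "\<forall>j'\<in>{1..<j}. \<not> \<Theta> j' a" by blast
      have "j0 \<le> j" using min j by blast
      moreover have "\<not> j0 < j" using j j0 by auto
      ultimately show "g ! j0 = i" using j by simp
    next
      assume "g ! j0 = i"
      moreover have "\<forall>j'\<in>{1..<j0}. \<not> \<Theta> j' a" using min j0 by fastforce
      ultimately show "\<exists>j\<in>{1..M}. g!j = i \<and> \<Theta> j a \<and> (\<forall>j'\<in>{1..<j}. \<not> \<Theta> j' a)" using j0 by blast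
    qed
    then show ?thesis using L c True a_def by auto
  next
    case False
    then show ?thesis using L unfolding colf_def a_def by auto
  qed
qed

lemma Fsel_syn:
  assumes "\<And>j. free (\<theta> j t) \<subseteq> X" "\<And>j. bound (\<theta> j t) \<subseteq> BF" "\<And>j. qr (\<theta> j t) \<le> K"
  shows "free (Fsel \<theta> M g i t) \<subseteq> X" "bound (Fsel \<theta> M g i t) \<subseteq> BF" "qr (Fsel \<theta> M g i t) \<le> K"
proof -
  show "free (Fsel \<theta> M g i t) \<subseteq> X" unfolding Fsel_def using assms(1) by auto
  show "bound (Fsel \<theta> M g i t) \<subseteq> BF" unfolding Fsel_def using assms(2) by auto
  show "qr (Fsel \<theta> M g i t) \<le> K" unfolding Fsel_def using assms(3)
    by (auto intro!: qr_Disjs qr_Conjs)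
qed

lemma Fsel_wf: "arith_sig \<tau> \<Longrightarrow> (\<And>j. wf_fm \<tau> (\<theta> j t)) \<Longrightarrow> wf_fm \<tau> (Fsel \<theta> M g i t)"
  unfolding Fsel_def by (auto intro!: wf_Disjs wf_Conjs)

definition ndist :: "nat \<Rightarrow> nat \<Rightarrow> nat" where "ndist x y = (if x < y then y - x else x - y)"

lemma ndist_pos: "x \<noteq> y \<Longrightarrow> 0 < ndist x y" unfolding ndist_def by auto
lemma ndist_lt: "x < n \<Longrightarrow> y < n \<Longrightarrow> ndist x y < n" unfolding ndist_def by auto
lemma mod_eq_ndist: assumes "x mod q = y mod q" shows "q dvd ndist x y"
proof (cases "x < y")
  case True
  then show ?thesis using mod_eq_dvd_iff_nat[of x y q] assms unfolding ndist_def by simp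
next
  case False
  then show ?thesis using mod_eq_dvd_iff_nat[of y x q] assms unfolding ndist_def by simp
qed

lemma coprime_fam:
  assumes "1 \<le> t" "t < t'" "t' \<le> N"
  shows "coprime (t * fact N + 1) (t' * fact N + 1 :: nat)"
proof (rule coprimeI)
  fix c :: nat assume c1: "c dvd t * fact N + 1" and c2: "c dvd t' * fact N + 1"
  have cop: "coprime c (fact N)"
  proof (rule coprimeI)
    fix d :: nat assume "d dvd c" "d dvd fact N"
    then have "d dvd t * fact N + 1" "d dvd t * fact N" using c1 by auto
    then have "d dvd 1" using dvd_add_right_iff by blast
    then show "is_unit d" by simp
  qed
  have "c dvd (t' * fact N + 1) - (t * fact N + 1)" using c1 c2 dvd_diff_nat by blast
  also have "(t' * fact N + 1) - (t * fact N + 1) = (t' - t) * fact N"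
    using assms by (simp add: diff_mult_distrib)
  finally have "c dvd (t' - t) * fact N" .
  then have "c dvd (t' - t)" by (rule iffD1[OF coprime_dvd_mult_left_iff[OF cop]])
  moreover have "(t' - t) dvd fact N" using assms by (intro dvd_fact) auto
  ultimately have "c dvd fact N" by (rule dvd_trans)
  then show "is_unit c" by (rule coprime_common_divisor[OF cop dvd_refl])
qed

lemma good_q:
  fixes S :: "nat set" and n m N :: nat
  assumes fin: "finite S" and sub: "S \<subseteq> {..<n}" and card: "card S \<le> m" and N1: "N \<ge> 1"
    and n1: "n \<ge> 1" and big: "n^(m*m) \<le> (fact N)^N"
  shows "\<exists>q. 0 < q \<and> q \<le> fact (Suc N) \<and> inj_on (\<lambda>x. x mod q) S"
proof (rule ccontr)
  assume nq: "\<not> ?thesis"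
  define F :: nat where "F = fact N"
  have F1: "F \<ge> 1" unfolding F_def by simp
  define Pairs where "Pairs = {(x,y). x \<in> S \<and> y \<in> S \<and> x \<noteq> y}"
  have Psub: "Pairs \<subseteq> S \<times> S" unfolding Pairs_def by auto
  have finP: "finite Pairs" using finite_subset[OF Psub] fin by auto
  define D where "D = (\<Prod>(x,y)\<in>Pairs. ndist x y)"
  have Dpos: "0 < D" unfolding D_def using finP
    by (intro prod_pos) (auto simp: Pairs_def ndist_pos)
  have cardP: "card Pairs \<le> m * m"
  proof -
    have "card Pairs \<le> card (S \<times> S)" using Psub fin by (intro card_mono) auto
    also have "\<dots> = card S * card S" by (simp add: card_cartesian_product)
    also have "\<dots> \<le> m * m" using card by (intro mult_mono) auto
    finally show ?thesis .
  qed
  have Dle: "D \<le> n^(m*m)"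
  proof (cases "S = {}")
    case True then show ?thesis unfolding D_def Pairs_def using n1 by simp
  next
    case False
    show ?thesis unfolding D_def
      using sub n1 cardP
      by (intro prod_le_power) (auto simp: Pairs_def intro!: less_imp_le ndist_lt)
  qed
  have dv: "(t * F + 1) dvd D" if t: "t \<in> {1..N}" for t
  proof -
    have "\<not> inj_on (\<lambda>x. x mod (t * F + 1)) S"
    proof
      assume "inj_on (\<lambda>x. x mod (t * F + 1)) S"
      moreover have "t * F + 1 \<le> fact (Suc N)"
      proof -
        have "t * F + 1 \<le> N * F + F" using t F1 by (intro add_mono mult_right_mono) auto
        also have "\<dots> = fact (Suc N)" unfolding F_def by simp
        finally show ?thesis .
      qed
      ultimately show False using nq by auto
    qed
    then obtain x y where xy: "x \<in> S" "y \<in> S" "x \<noteq> y" "x mod (t*F+1) = y mod (t*F+1)"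
      unfolding inj_on_def by blast
    then have "(t*F+1) dvd ndist x y" by (intro mod_eq_ndist)
    also have "ndist x y dvd D" unfolding D_def using xy finP
      by (intro dvd_prodI[where f = "\<lambda>(x,y). ndist x y" and a = "(x,y)", simplified]) (auto simp: Pairs_def)
    finally show ?thesis .
  qed
  have "[D = 0] (mod (\<Prod>t\<in>{1..N}. t * F + 1))"
  proof (rule coprime_cong_prod_nat)
    fix i j assume "i \<in> {1..N}" "j \<in> {1..N}" "i \<noteq> j"
    then show "coprime (i * F + 1) (j * F + 1)"
      unfolding F_def using coprime_fam coprime_commute
      by (metis atLeastAtMost_iff linorder_neqE_nat)
  next
    fix i assume "i \<in> {1..N}" then show "[D = 0] (mod i * F + 1)" using dv by (simp add: cong_0_iff)
  qed
  then have "(\<Prod>t\<in>{1..N}. t * F + 1) dvd D" by (simp add: cong_0_iff)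
  then have "(\<Prod>t\<in>{1..N}. t * F + 1) \<le> D" using Dpos by (intro dvd_imp_le)
  moreover have "(F + 1)^N \<le> (\<Prod>t\<in>{1..N}. t * F + 1)"
  proof -
    have "(\<Prod>t\<in>{1..N}. F + 1) \<le> (\<Prod>t\<in>{1..N}. t * F + 1)"
      by (intro prod_mono) auto
    then show ?thesis by simp
  qed
  moreover have "F^N < (F+1)^N" using N1 by (intro power_strict_mono) auto
  ultimately show False using Dle big unfolding F_def by linarith
qed

lemma crt_part:
  fixes S :: "nat set" and q m :: nat and c :: "nat \<Rightarrow> nat"
  assumes fin: "finite S" and q: "0 < q" and inj: "inj_on (\<lambda>x. x mod q) S" and card: "card S \<le> m"
    and m: "1 \<le> m" and c: "\<forall>x\<in>S. c x \<in> {1..m}"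
  shows "\<exists>L R. L \<le> m * q^(m*m) \<and> 1 \<le> L \<and> R < (\<Prod>x\<in>S. (x mod q + 1) * L + 1)
     \<and> (\<forall>x\<in>S. R mod ((x mod q + 1) * L + 1) = c x)"
proof -
  define Pairs where "Pairs = {(x,y). x \<in> S \<and> y \<in> S \<and> x \<noteq> y}"
  have Psub: "Pairs \<subseteq> S \<times> S" unfolding Pairs_def by auto
  have finP: "finite Pairs" using finite_subset[OF Psub] fin by auto
  have cardP: "card Pairs \<le> m * m"
  proof -
    have "card Pairs \<le> card (S \<times> S)" using Psub fin by (intro card_mono) auto
    also have "\<dots> = card S * card S" by (simp add: card_cartesian_product)
    also have "\<dots> \<le> m * m" using card by (intro mult_mono) auto
    finally show ?thesis .
  qed
  define L0 where "L0 = (\<Prod>(x,y)\<in>Pairs. ndist (x mod q) (y mod q))"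
  define L where "L = m * L0"
  have L0pos: "0 < L0" unfolding L0_def using finP inj
    by (intro prod_pos) (auto simp: Pairs_def inj_on_def intro!: ndist_pos)
  have L0le: "L0 \<le> q^(m*m)" unfolding L0_def using cardP q
    by (intro prod_le_power) (auto simp: Pairs_def intro!: less_imp_le ndist_lt)
  have dvL: "ndist (x mod q) (y mod q) dvd L" if "x \<in> S" "y \<in> S" "x \<noteq> y" for x y
  proof -
    have "ndist (x mod q) (y mod q) dvd L0" unfolding L0_def using that finP
      by (intro dvd_prodI[where f = "\<lambda>(x,y). ndist (x mod q) (y mod q)" and a = "(x,y)", simplified])
        (auto simp: Pairs_def)
    then show ?thesis unfolding L_def by simp
  qed
  define p where "p x = (x mod q + 1) * L + 1" for x
  have cop: "coprime (p x) (p y)" if xy: "x \<in> S" "y \<in> S" "x \<noteq> y" for x y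
  proof (rule coprimeI)
    fix d :: nat assume d1: "d dvd p x" and d2: "d dvd p y"
    have copL: "coprime d L"
    proof (rule coprimeI)
      fix e :: nat assume "e dvd d" "e dvd L"
      then have "e dvd (x mod q + 1) * L + 1" "e dvd (x mod q + 1) * L" using d1 unfolding p_def by auto
      then have "e dvd 1" using dvd_add_right_iff by blast
      then show "is_unit e" by simp
    qed
    have "d dvd ndist (x mod q) (y mod q) * L"
    proof (cases "x mod q < y mod q")
      case True
      have "d dvd p y - p x" using d1 d2 dvd_diff_nat by blast
      also have "p y - p x = ndist (x mod q) (y mod q) * L"
        unfolding p_def ndist_def using True by (simp add: diff_mult_distrib)
      finally show ?thesis .
    next
      case False
      have "d dvd p x - p y" using d1 d2 dvd_diff_nat by blast
      also have "p x - p y = ndist (x mod q) (y mod q) * L"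
        unfolding p_def ndist_def using False by (simp add: diff_mult_distrib)
      finally show ?thesis .
    qed
    then have "d dvd ndist (x mod q) (y mod q)" by (rule iffD1[OF coprime_dvd_mult_left_iff[OF copL]])
    then have "d dvd L" using dvL[OF xy] by (rule dvd_trans)
    then show "is_unit d" by (rule coprime_common_divisor[OF copL dvd_refl])
  qed
  have "\<exists>!R. R < (\<Prod>x\<in>S. p x) \<and> (\<forall>x\<in>S. [R = c x] (mod p x))"
    using fin cop by (intro chinese_remainder_unique_nat) (auto simp: p_def)
  then obtain R where R: "R < (\<Prod>x\<in>S. p x)" "\<forall>x\<in>S. [R = c x] (mod p x)" by blast
  have "R mod p x = c x" if "x \<in> S" for x
  proof -
    have "c x \<le> m" using c that by auto
    also have "m \<le> L" unfolding L_def using L0pos by simp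
    also have "L < p x" unfolding p_def by simp
    finally have "c x < p x" .
    then show ?thesis using R(2) that unfolding cong_def by simp
  qed
  moreover have "L \<le> m * q^(m*m)" unfolding L_def using L0le by simp
  moreover have "1 \<le> L" unfolding L_def using m L0pos by simp
  ultimately show ?thesis using R(1) unfolding p_def by blast
qed

lemma fact_ge: "k \<ge> 3 \<Longrightarrow> k + 2 \<le> (fact k :: nat)"
proof (induction k rule: nat_induct_at_least)
  case base then show ?case by (simp add: numeral_3_eq_3)
next
  case (Suc k)
  have "Suc k + 2 \<le> 2 * (k + 2)" by simp
  also have "\<dots> \<le> Suc k * (k + 2)" using Suc by (intro mult_right_mono) auto
  also have "\<dots> \<le> Suc k * fact k" by (intro mult_left_mono) (use Suc in auto)
  finally show ?case by simp
qed

definition KK :: "nat \<Rightarrow> nat" where "KK m = (m*m+3)*m"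
definition NN1 :: "nat \<Rightarrow> nat" where "NN1 m = 4 * KK m * (m*m) + m + 4"
definition NN0 :: "nat \<Rightarrow> nat" where "NN0 m = (fact (NN1 m))^(NN1 m)"

lemma NN0_ge: "m < NN0 m"
proof -
  have "m < NN1 m" unfolding NN1_def by simp
  also have "NN1 m \<le> fact (NN1 m)" by (rule fact_ge_self)
  also have "fact (NN1 m) \<le> (fact (NN1 m) :: nat)^(NN1 m)"
    unfolding NN1_def by (intro self_le_power) auto
  finally show ?thesis unfolding NN0_def .
qed

lemma choose_N:
  assumes m: "m \<ge> 1" and n: "n > NN0 m"
  shows "\<exists>N. N \<ge> 1 \<and> n^(m*m) \<le> (fact N)^N \<and> (fact (Suc N) + m + 1)^(KK m) < n"
proof -
  let ?P = "\<lambda>N. n^(m*m) \<le> (fact N :: nat)^N"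
  have n1: "n \<ge> 1" using n by simp
  have mm1: "m * m \<ge> 1" using m by simp
  have nle: "n \<le> n^(m*m)" using n1 mm1 by (intro self_le_power) auto
  have ex: "?P (n^(m*m))"
  proof -
    let ?N = "n^(m*m)"
    have "?N \<le> fact ?N" by (rule fact_ge_self)
    also have "(fact ?N :: nat) \<le> (fact ?N)^?N"
      using n1 by (intro self_le_power) auto
    finally show ?thesis .
  qed
  define N where "N = (LEAST N. ?P N)"
  have PN: "?P N" unfolding N_def using ex by (rule LeastI)
  have N1: "N \<ge> NN1 m"
  proof (rule ccontr)
    assume "\<not> ?thesis"
    then have "N \<le> NN1 m" by simp
    then have "(fact N :: nat)^N \<le> (fact (NN1 m))^N" by (intro power_mono fact_mono) auto
    also have "\<dots> \<le> (fact (NN1 m))^(NN1 m)" using \<open>N \<le> NN1 m\<close> by (intro power_increasing) auto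
    finally have "n^(m*m) \<le> NN0 m" using PN unfolding NN0_def by simp
    then show False using n nle by simp
  qed
  define N' where "N' = N - 1"
  have NN': "N = Suc N'" unfolding N'_def using N1 unfolding NN1_def by simp
  have notP: "\<not> ?P N'" unfolding N_def N'_def
    using not_less_Least[of "N - 1" ?P] N1 unfolding N_def NN1_def by auto
  have N'3: "N' \<ge> 3" using N1 NN' unfolding NN1_def by simp
  have fN': "N' + 2 \<le> fact N'" using fact_ge[OF N'3] .
  define X where "X = fact (Suc N) + m + 1"
  have fS: "(fact (Suc N) :: nat) = (N' + 2) * (N' + 1) * fact N'" using NN' by (simp add: algebra_simps)
  have "m + 1 \<le> Suc N" using N1 unfolding NN1_def by simp
  also have "Suc N \<le> fact (Suc N)" by (rule fact_ge_self)
  finally have "X \<le> 2 * fact (Suc N)" unfolding X_def by simp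
  also have "\<dots> = (2 * (N' + 1)) * (N' + 2) * fact N'" using fS by simp
  also have "\<dots> \<le> ((N' + 2) * (N' + 2)) * (N' + 2) * fact N'"
    using N'3 by (intro mult_right_mono) auto
  also have "\<dots> \<le> (fact N' * fact N') * fact N' * fact N'"
    using fN' by (intro mult_right_mono mult_mono) auto
  finally have X4: "X \<le> (fact N')^4" by (simp add: power_def algebra_simps eval_nat_numeral)
  have "4 * KK m * (m*m) \<le> N'" using N1 NN' unfolding NN1_def by simp
  have "(X^(KK m))^(m*m) = X^(KK m * (m*m))" by (simp add: power_mult)
  also have "\<dots> \<le> ((fact N')^4)^(KK m * (m*m))" using X4 by (intro power_mono) auto
  also have "\<dots> = (fact N')^(4 * KK m * (m*m))" by (simp add: power_mult mult.assoc)
  also have "\<dots> \<le> (fact N')^N'"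
    using \<open>4 * KK m * (m*m) \<le> N'\<close> by (intro power_increasing) auto
  also have "\<dots> < n^(m*m)" using notP by simp
  finally have XK: "X^(KK m) < n" by (rule power_less_imp_less_base) simp
  have "N \<ge> 1" using NN' by simp
  then show ?thesis using PN XK unfolding X_def by blast
qed

lemma NT:
  fixes S :: "nat set" and c :: "nat \<Rightarrow> nat"
  assumes m: "m \<ge> 1" and n: "n > NN0 m" and fin: "finite S" and sub: "S \<subseteq> {..<n}"
    and card: "card S \<le> m" and c: "\<forall>x\<in>S. c x \<in> {1..m}"
  shows "\<exists>q L R. 0 < q \<and> q < n \<and> L < n \<and> R < n \<and>
    (\<forall>x\<in>S. (x mod q + 1) * L + 1 < n \<and> R mod ((x mod q + 1) * L + 1) = c x)"
proof -
  obtain N where N: "N \<ge> 1" "n^(m*m) \<le> (fact N)^N" "(fact (Suc N) + m + 1)^(KK m) < n"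
    using choose_N[OF m n] by blast
  have n1: "n \<ge> 1" using n by simp
  obtain q where q: "0 < q" "q \<le> fact (Suc N)" "inj_on (\<lambda>x. x mod q) S"
    using good_q[OF fin sub card N(1) n1 N(2)] by blast
  obtain L R where LR: "L \<le> m * q^(m*m)" "1 \<le> L" "R < (\<Prod>x\<in>S. (x mod q + 1) * L + 1)"
     "\<forall>x\<in>S. R mod ((x mod q + 1) * L + 1) = c x"
    using crt_part[OF fin q(1) q(3) card m c] by blast
  define Qc where "Qc = q + m + 1"
  define X where "X = fact (Suc N) + m + 1"
  have QX: "Qc \<le> X" unfolding Qc_def X_def using q by simp
  have Q2: "Qc \<ge> 2" unfolding Qc_def using q by simp
  have K: "m*m+3 \<le> KK m" unfolding KK_def using m by simp
  have XK: "Qc^j < n" if "j \<le> KK m" for j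
  proof -
    have "Qc^j \<le> Qc^(KK m)" using that Q2 by (intro power_increasing) auto
    also have "\<dots> \<le> X^(KK m)" using QX by (intro power_mono) auto
    finally show ?thesis using N(3) unfolding X_def by simp
  qed
  have Lb: "L \<le> Qc^(m*m+1)"
  proof -
    have "L \<le> m * q^(m*m)" by (rule LR(1))
    also have "\<dots> \<le> Qc * Qc^(m*m)" unfolding Qc_def by (intro mult_mono power_mono) auto
    finally show ?thesis by simp
  qed
  have pb: "(x mod q + 1) * L + 1 \<le> Qc^(m*m+3)" for x
  proof -
    have "x mod q < q" using q(1) by simp
    then have "x mod q + 1 \<le> Qc" unfolding Qc_def by simp
    then have "(x mod q + 1) * L \<le> Qc * Qc^(m*m+1)" using Lb by (intro mult_mono) auto
    also have "\<dots> = Qc^(m*m+2)" by simp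
    finally have a: "(x mod q + 1) * L \<le> Qc^(m*m+2)" .
    have "0 < Qc^(m*m+2)" using Q2 by simp
    then have "(x mod q + 1) * L + 1 \<le> Qc^(m*m+2) + Qc^(m*m+2)" using a by linarith
    also have "\<dots> \<le> Qc * Qc^(m*m+2)" using Q2 by (simp add: mult_2[symmetric])
    also have "Qc * Qc^(m*m+2) = Qc^(m*m+3)" by (simp add: power_add eval_nat_numeral mult_ac)
    finally show ?thesis .
  qed
  have prodb: "(\<Prod>x\<in>S. (x mod q + 1) * L + 1) \<le> Qc^(KK m)"
  proof -
    have "(\<Prod>x\<in>S. (x mod q + 1) * L + 1) \<le> (Qc^(m*m+3))^m"
      using card Q2 pb by (intro prod_le_power) auto
    also have "\<dots> = Qc^(KK m)" unfolding KK_def by (simp add: power_mult)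
    finally show ?thesis .
  qed
  have prodn: "(\<Prod>x\<in>S. (x mod q + 1) * L + 1) < n" using prodb XK[of "KK m"] by simp
  have "\<forall>x\<in>S. (x mod q + 1) * L + 1 < n"
  proof
    fix x assume "x \<in> S"
    then have "(x mod q + 1) * L + 1 dvd (\<Prod>x\<in>S. (x mod q + 1) * L + 1)" using fin by auto
    then have "(x mod q + 1) * L + 1 \<le> (\<Prod>x\<in>S. (x mod q + 1) * L + 1)"
      by (intro dvd_imp_le) (auto intro!: prod_pos)
    then show "(x mod q + 1) * L + 1 < n" using prodn by simp
  qed
  moreover have "q < n"
  proof -
    have "q \<le> Qc^1" unfolding Qc_def by simp
    also have "\<dots> < n" using XK[of 1] K by simp
    finally show ?thesis .
  qed
  moreover have "L < n" using Lb XK[of "m*m+1"] K by simp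
  moreover have "R < n" using LR(3) prodn by simp
  ultimately show ?thesis using q(1) LR(4) by blast
qed

definition numv :: "struc \<Rightarrow> nat \<Rightarrow> nat" where "numv A j = eval A (\<lambda>_. 0) (numt j)"
lemma eval_numt_v[simp]: "eval A s (numt j) = numv A j" unfolding numv_def by (rule eval_numt_indep)

lemma eval_upd_big[simp]: "\<forall>y\<in>vars_trm t. y < V \<Longrightarrow> eval A (s(V + k := a)) t = eval A s t"
  by (rule eval_upd) auto

definition thl :: "nat \<Rightarrow> nat \<Rightarrow> trm \<Rightarrow> fm" where
  "thl V j t = Ex (V+3) (Ex (V+4) (Ex (V+5) (Conj
      (Conj (Rel Mult [Var (V+4), Var V, Var (V+5)])
        (Conj (Rel Add [Var (V+5), Var (V+3), t]) (Rel Less [Var (V+3), Var V])))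
      (Ex (V+6) (Ex (V+7) (Ex (V+8)
        (Conj (Rel Mult [App Succ [Var (V+3)], Var (V+1), Var (V+6)])
        (Conj (Rel Less [Var (V+6), App Succ [Var (V+6)]])
        (Conj (Rel Mult [Var (V+7), App Succ [Var (V+6)], Var (V+8)])
        (Conj (Rel Add [Var (V+8), numt j, Var (V+2)])
              (Rel Less [numt j, App Succ [Var (V+6)]])))))))))))"

definition ThL :: "struc \<Rightarrow> nat \<Rightarrow> nat \<Rightarrow> nat \<Rightarrow> nat \<Rightarrow> nat \<Rightarrow> bool" where
  "ThL A q L R j x = (\<exists>u\<in>univ A. \<exists>a\<in>univ A. \<exists>b\<in>univ A.
     (rint A Mult [a,q,b] \<and> rint A Add [b,u,x] \<and> rint A Less [u,q]) \<and>
     (\<exists>w\<in>univ A. \<exists>e\<in>univ A. \<exists>f\<in>univ A. rint A Mult [fint A Succ [u], L, w]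
        \<and> rint A Less [w, fint A Succ [w]] \<and> rint A Mult [e, fint A Succ [w], f]
        \<and> rint A Add [f, numv A j, R] \<and> rint A Less [numv A j, fint A Succ [w]]))"

lemma sat_thl: "\<forall>y\<in>vars_trm t. y < V \<Longrightarrow>
   sat A s (thl V j t) = ThL A (s V) (s (V+1)) (s (V+2)) j (eval A s t)"
  unfolding thl_def ThL_def by simp

lemma thl_free: "free (thl V j t) \<subseteq> vars_trm t \<union> {V, V+1, V+2}"
  unfolding thl_def by auto
lemma thl_bound: "bound (thl V j t) \<subseteq> {V..<V+9}"
  unfolding thl_def by auto
lemma thl_qr: "qr (thl V j t) = 6"
  unfolding thl_def by simp
lemma thl_wf: assumes "arith_sig \<tau>" "wf_trm \<tau> t" shows "wf_fm \<tau> (thl V j t)"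
proof -
  have "wf_trm \<tau> (numt j)" using wf_numt assms(1) .
  then show ?thesis using assms unfolding thl_def arith_sig_def by simp
qed

definition ths :: "nat \<Rightarrow> trm \<Rightarrow> fm" where "ths j t = Eq t (numt (j - 1))"
lemma sat_ths: "sat A s (ths j t) = (eval A s t = numv A (j - 1))" by (simp add: ths_def)
lemma ths_syn: "free (ths j t) = vars_trm t" "bound (ths j t) = {}" "qr (ths j t) = 0"
  by (auto simp: ths_def)
lemma ths_wf: "arith_sig \<tau> \<Longrightarrow> wf_trm \<tau> t \<Longrightarrow> wf_fm \<tau> (ths j t)"
  by (simp add: ths_def wf_numt)

lemma colstruc_coloring:
  assumes SG: "arith_sig \<tau>" and A: "is_struc \<tau> A" and col: "\<forall>a\<in>univ A. col a \<in> {1..k}"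
  shows "coloring \<tau> k A (colstruc A col)"
proof -
  have nc: "\<forall>r\<in>rsyms \<tau>. \<forall>i. r \<noteq> Col i" using SG unfolding arith_sig_def by auto
  have "is_struc (colors \<tau> k) (colstruc A col)" using A unfolding is_struc_def by simp
  moreover have "\<forall>r\<in>rsyms \<tau>. \<forall>as. length as = rarity \<tau> r \<and> set as \<subseteq> univ A
         \<longrightarrow> rint (colstruc A col) r as = rint A r as" using nc by simp
  moreover have "\<forall>a\<in>univ A. \<exists>!i. i \<in> {1..k} \<and> rint (colstruc A col) (Col i) [a]"
    using col by auto
  ultimately show ?thesis unfolding coloring_def by simp
qed

lemma colf_range: assumes "g \<in> set (List.n_lists (Suc M) [1..<Suc k])"
  shows "colf \<Theta> M g a \<in> {1..k}"
proof -
  have e: "set [1..<Suc k] = {1..k}" by auto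
  have g: "length g = Suc M" "set g \<subseteq> {1..k}" using assms unfolding set_n_lists e by auto
  have "\<exists>j\<le>M. colf \<Theta> M g a = g ! j"
  proof (cases "\<exists>j\<in>{1..M}. \<Theta> j a")
    case True
    then have "(LEAST j. j \<in> {1..M} \<and> \<Theta> j a) \<in> {1..M}" by (metis (mono_tags, lifting) LeastI)
    then show ?thesis unfolding colf_def using True by auto
  next
    case False then show ?thesis unfolding colf_def by auto
  qed
  then obtain j where "j \<le> M" "colf \<Theta> M g a = g ! j" by blast
  then show ?thesis using g by (metis in_mono less_Suc_eq_le nth_mem)
qed

lemma sound_generic:
  assumes SG: "arith_sig \<tau>" and A: "is_struc \<tau> A" and WF: "wf_fm (colors \<tau> k) \<phi>" and SE: "sentence \<phi>"
    and Vb: "\<forall>y\<in>vars_fm \<phi>. y < V" and P: "\<forall>v\<in>P. V \<le> v"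
    and F: "\<And>i t s. (\<forall>v\<in>P. s v = s0 v) \<Longrightarrow> (\<forall>y\<in>vars_trm t. y < V) \<Longrightarrow> sat A s (F i t) = (col (eval A s t) = i)"
    and colk: "\<forall>a\<in>univ A. col a \<in> {1..k}"
    and S: "sat A s0 (rc F \<phi>)"
  shows "\<exists>B. coloring \<tau> k A B \<and> models B \<phi>"
proof (intro exI conjI)
  show "coloring \<tau> k A (colstruc A col)" by (rule colstruc_coloring[OF SG A colk])
  have "sat (colstruc A col) s0 \<phi>" using sat_rc[of P s0 V A F col, OF F P WF Vb] S by simp
  then show "models (colstruc A col) \<phi>" unfolding models_def
    using sat_cong[of \<phi>] SE unfolding sentence_def by blast
qed

definition elt :: "struc \<Rightarrow> nat \<Rightarrow> nat" where "elt A p = (SOME a. a \<in> univ A \<and> pos A a = p)"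

context
  fixes \<tau> A
  assumes AS: "arith_struc \<tau> A" and SG: "arith_sig \<tau>"
begin

lemma elt: "p < card (univ A) \<Longrightarrow> elt A p \<in> univ A \<and> pos A (elt A p) = p"
  unfolding elt_def using pos_surj[OF AS SG] by (metis (mono_tags, lifting) someI_ex)

lemma elt_pos: "a \<in> univ A \<Longrightarrow> elt A (pos A a) = a"
  using elt[OF pos_lt_n[OF AS SG]] pos_inj[OF AS SG] by metis

lemma numv: "j < card (univ A) \<Longrightarrow> numv A j \<in> univ A \<and> pos A (numv A j) = j"
  using eval_numt[OF AS SG, of "\<lambda>_. 0" j] unfolding numv_def by simp

lemma numv_gen: "numv A j \<in> univ A \<and> pos A (numv A j) = min j (card (univ A) - 1)"
  using eval_numt[OF AS SG, of "\<lambda>_. 0" j] unfolding numv_def by simp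

lemma ThL_iff:
  assumes q: "q \<in> univ A" and L: "L \<in> univ A" and R: "R \<in> univ A" and x: "x \<in> univ A"
    and j: "j < card (univ A)"
  shows "ThL A q L R j x \<longleftrightarrow> (0 < pos A q \<and> (pos A x mod pos A q + 1) * pos A L + 1 < card (univ A)
     \<and> pos A R mod ((pos A x mod pos A q + 1) * pos A L + 1) = j)"
proof
  note lt = pos_lt_n[OF AS SG] and li = less_iff[OF AS SG] and mi = mult_iff[OF AS SG]
    and ai = add_iff[OF AS SG] and si = succ_in[OF AS SG]
  have nj: "numv A j \<in> univ A" "pos A (numv A j) = j" using numv[OF j] by auto
  assume "ThL A q L R j x"
  then obtain u a b w e f where
    ins: "u \<in> univ A" "a \<in> univ A" "b \<in> univ A" "w \<in> univ A" "e \<in> univ A" "f \<in> univ A" and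
    r: "rint A Mult [a,q,b]" "rint A Add [b,u,x]" "rint A Less [u,q]"
       "rint A Mult [fint A Succ [u], L, w]" "rint A Less [w, fint A Succ [w]]"
       "rint A Mult [e, fint A Succ [w], f]" "rint A Add [f, numv A j, R]"
       "rint A Less [numv A j, fint A Succ [w]]"
    unfolding ThL_def by blast
  have p1: "pos A a * pos A q = pos A b" using r(1) mi ins q by blast
  have p2: "pos A b + pos A u = pos A x" using r(2) ai ins x by blast
  have p3: "pos A u < pos A q" using r(3) li ins q by blast
  have pq: "pos A q < card (univ A)" using lt q .
  have psu: "pos A (fint A Succ [u]) = pos A u + 1"
    using succ_pos[OF AS SG ins(1)] p3 pq by simp
  have p4: "(pos A u + 1) * pos A L = pos A w"
    using r(4) mi si[OF ins(1)] L ins(4) psu by metis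
  have psw: "pos A (fint A Succ [w]) = pos A w + 1"
  proof (cases "pos A w + 1 < card (univ A)")
    case True then show ?thesis using succ_pos[OF AS SG ins(4)] by simp
  next
    case False
    then have "pos A w + 1 = card (univ A)" using lt[OF ins(4)] by simp
    then have "fint A Succ [w] = w" using succ_max[OF AS SG ins(4)] by simp
    then show ?thesis using r(5) irr[OF AS SG ins(4)] by simp
  qed
  have p5: "pos A e * (pos A w + 1) = pos A f" using r(6) mi ins si[OF ins(4)] psw by metis
  have p6: "pos A f + j = pos A R" using r(7) ai ins nj R by metis
  have p7: "j < pos A w + 1" using r(8) li nj si[OF ins(4)] psw by metis
  have q0: "0 < pos A q" using p3 by simp
  have um: "pos A x mod pos A q = pos A u"
  proof -
    have "pos A x = pos A u + pos A a * pos A q" using p1 p2 by simp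
    then show ?thesis using p3 by simp
  qed
  have Pn: "pos A w + 1 < card (univ A)" using lt[OF si[OF ins(4)]] psw by simp
  have "pos A R = j + pos A e * (pos A w + 1)" using p5 p6 by simp
  then have "pos A R mod (pos A w + 1) = j" using p7 by (metis mod_less mod_mult_self2 mod_mult_self1 mult.commute)
  then show "0 < pos A q \<and> (pos A x mod pos A q + 1) * pos A L + 1 < card (univ A)
     \<and> pos A R mod ((pos A x mod pos A q + 1) * pos A L + 1) = j"
    using q0 um p4 Pn by simp
next
  note lt = pos_lt_n[OF AS SG] and li = less_iff[OF AS SG] and mi = mult_iff[OF AS SG]
    and ai = add_iff[OF AS SG] and si = succ_in[OF AS SG]
  have nj: "numv A j \<in> univ A" "pos A (numv A j) = j" using numv[OF j] by auto
  assume H: "0 < pos A q \<and> (pos A x mod pos A q + 1) * pos A L + 1 < card (univ A)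
     \<and> pos A R mod ((pos A x mod pos A q + 1) * pos A L + 1) = j"
  define n where "n = card (univ A)"
  define Q where "Q = pos A q"
  define X where "X = pos A x"
  define P where "P = (X mod Q + 1) * pos A L + 1"
  have Q0: "0 < Q" and Pn: "P < n" and RP: "pos A R mod P = j"
    using H unfolding Q_def X_def P_def n_def by auto
  have Xn: "X < n" unfolding X_def n_def using lt x .
  have Rn: "pos A R < n" unfolding n_def using lt R .
  have Qn: "Q < n" unfolding Q_def n_def using lt q .
  define u where "u = elt A (X mod Q)"
  define a where "a = elt A (X div Q)"
  define b where "b = elt A (X div Q * Q)"
  define w where "w = elt A (P - 1)"
  define e where "e = elt A (pos A R div P)"
  define f where "f = elt A (pos A R div P * P)"
  have "X mod Q < Q" using Q0 by simp
  then have u: "u \<in> univ A" "pos A u = X mod Q" using elt Qn unfolding u_def n_def by auto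
  have "X div Q < card (univ A)" using Xn unfolding n_def by (meson div_le_dividend le_less_trans)
  then have a: "a \<in> univ A" "pos A a = X div Q" using elt unfolding a_def by auto
  have "X div Q * Q < card (univ A)" using Xn unfolding n_def by (meson div_times_less_eq_dividend le_less_trans)
  then have b: "b \<in> univ A" "pos A b = X div Q * Q" using elt unfolding b_def by auto
  have w: "w \<in> univ A" "pos A w = P - 1" using elt Pn unfolding w_def n_def by auto
  have "pos A R div P < card (univ A)" using Rn unfolding n_def by (meson div_le_dividend le_less_trans)
  then have e: "e \<in> univ A" "pos A e = pos A R div P" using elt unfolding e_def by auto
  have "pos A R div P * P < card (univ A)" using Rn unfolding n_def by (meson div_times_less_eq_dividend le_less_trans)
  then have f: "f \<in> univ A" "pos A f = pos A R div P * P" using elt unfolding f_def by auto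
  have psu: "pos A (fint A Succ [u]) = X mod Q + 1"
    using succ_pos[OF AS SG u(1)] u(2) \<open>X mod Q < Q\<close> Qn unfolding n_def by simp
  have P1: "P \<ge> 1" unfolding P_def by simp
  have psw: "pos A (fint A Succ [w]) = P"
    using succ_pos[OF AS SG w(1)] w(2) Pn P1 unfolding n_def by simp
  have r1: "rint A Mult [a,q,b]" using mi a b q unfolding Q_def by simp
  have r2: "rint A Add [b,u,x]" using ai b u x unfolding X_def by simp
  have r3: "rint A Less [u,q]" using li u q \<open>X mod Q < Q\<close> unfolding Q_def by simp
  have r4: "rint A Mult [fint A Succ [u], L, w]" using mi si[OF u(1)] L w psu unfolding P_def by simp
  have r5: "rint A Less [w, fint A Succ [w]]" using li w si[OF w(1)] psw P1 by simp
  have r6: "rint A Mult [e, fint A Succ [w], f]" using mi e f si[OF w(1)] psw by simp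
  have "pos A R div P * P + j = pos A R" using RP div_mult_mod_eq[of "pos A R" P] by simp
  then have r7: "rint A Add [f, numv A j, R]" using ai f nj R by simp
  have "j < P" using RP P1 by auto
  then have r8: "rint A Less [numv A j, fint A Succ [w]]" using li nj si[OF w(1)] psw by simp
  show "ThL A q L R j x" unfolding ThL_def
    using u(1) a(1) b(1) w(1) e(1) f(1) r1 r2 r3 r4 r5 r6 r7 r8 by blast
qed

end

context
  fixes \<tau> A
  assumes AS: "arith_struc \<tau> A" and SG: "arith_sig \<tau>"
begin

lemma complete_small:
  assumes n: "card (univ A) \<le> N0" and colB: "\<forall>a\<in>univ A. colB a \<in> {1..k}"
  shows "\<exists>g\<in>set (List.n_lists (Suc N0) [1..<Suc k]).
           \<forall>a\<in>univ A. colf (\<lambda>j x. x = numv A (j - 1)) N0 g a = colB a"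
proof -
  have ne: "univ A \<noteq> {}" using neU[OF AS SG] .
  then have k1: "1 \<le> k" using colB by fastforce
  define g where "g = map (\<lambda>j. if 1 \<le> j \<and> j - 1 < card (univ A) then colB (elt A (j - 1)) else 1) [0..<Suc N0]"
  have e: "set [1..<Suc k] = {1..k}" by auto
  have gin: "g \<in> set (List.n_lists (Suc N0) [1..<Suc k])"
    unfolding set_n_lists e
  proof (intro CollectI conjI)
    show "length g = Suc N0" unfolding g_def by simp
    show "set g \<subseteq> {1..k}" unfolding g_def using colB elt[OF AS SG] k1 by auto
  qed
  have "\<forall>a\<in>univ A. colf (\<lambda>j x. x = numv A (j - 1)) N0 g a = colB a"
  proof
    fix a assume a: "a \<in> univ A"
    define p where "p = pos A a"
    have pn: "p < card (univ A)" unfolding p_def using pos_lt_n[OF AS SG a] .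
    have t: "a = numv A (Suc p - 1)"
      using numv[OF AS SG pn] pos_inj[OF AS SG] a unfolding p_def by simp
    have f: "a \<noteq> numv A (j - 1)" if "j \<in> {1..p}" for j
    proof -
      have "j \<le> p" using that by simp
      then have "j - 1 < card (univ A)" using pn by linarith
      then have "pos A (numv A (j - 1)) = j - 1" using numv[OF AS SG] by blast
      then show ?thesis using that unfolding p_def by auto
    qed
    have ex: "\<exists>j\<in>{1..N0}. a = numv A (j - 1)" using t pn n by (intro bexI[of _ "Suc p"]) auto
    have L: "(LEAST j. j \<in> {1..N0} \<and> a = numv A (j - 1)) = Suc p"
    proof (rule Least_equality)
      show "Suc p \<in> {1..N0} \<and> a = numv A (Suc p - 1)" using t pn n by auto
      fix y assume y: "y \<in> {1..N0} \<and> a = numv A (y - 1)"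
      show "Suc p \<le> y"
      proof (rule ccontr)
        assume "\<not> Suc p \<le> y"
        then have "y \<in> {1..p}" using y by auto
        then show False using f y by blast
      qed
    qed
    have "colf (\<lambda>j x. x = numv A (j - 1)) N0 g a = g ! Suc p"
      unfolding colf_def using ex L by simp
    also have "\<dots> = colB (elt A p)" unfolding g_def using pn n
      by (simp del: upt_Suc)
    also have "\<dots> = colB a" unfolding p_def using elt_pos[OF AS SG a] by simp
    finally show "colf (\<lambda>j x. x = numv A (j - 1)) N0 g a = colB a" .
  qed
  then show ?thesis using gin by blast
qed

lemma complete_large:
  assumes m: "m \<ge> 1" and n: "NN0 m < card (univ A)" and fin: "finite S" and Su: "S \<subseteq> univ A"
    and cS: "card S \<le> m" and colB: "\<forall>a\<in>univ A. colB a \<in> {1..k}"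
  shows "\<exists>g\<in>set (List.n_lists (Suc m) [1..<Suc k]). \<exists>q\<in>univ A. \<exists>L\<in>univ A. \<exists>R\<in>univ A.
           \<forall>a\<in>S. colf (ThL A q L R) m g a = colB a"
proof -
  have ne: "univ A \<noteq> {}" using neU[OF AS SG] .
  then have k1: "1 \<le> k" using colB by fastforce
  obtain h where h: "bij_betw h S {0..<card S}" using ex_bij_betw_finite_nat[OF fin] by blast
  define g where "g = map (\<lambda>j. if 1 \<le> j \<and> j - 1 < card S then colB (inv_into S h (j - 1)) else 1) [0..<Suc m]"
  have e: "set [1..<Suc k] = {1..k}" by auto
  have gin: "g \<in> set (List.n_lists (Suc m) [1..<Suc k])"
    unfolding set_n_lists e
  proof (intro CollectI conjI)
    show "length g = Suc m" unfolding g_def by simp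
    have "inv_into S h (j - 1) \<in> univ A" if "j - 1 < card S" for j
    proof -
      have "j - 1 \<in> h ` S" using h that unfolding bij_betw_def by auto
      then show ?thesis using Su inv_into_into[of "j - 1" h S] by auto
    qed
    then show "set g \<subseteq> {1..k}" unfolding g_def using colB k1 by auto
  qed
  define n where "n = card (univ A)"
  define S' where "S' = pos A ` S"
  define c where "c p = h (elt A p) + 1" for p
  have finS': "finite S'" unfolding S'_def using fin by simp
  have subS': "S' \<subseteq> {..<n}" unfolding S'_def n_def using Su pos_lt_n[OF AS SG] by auto
  have cS': "card S' \<le> m" unfolding S'_def using card_image_le[OF fin] cS by (meson le_trans)
  have cp: "c (pos A a) = h a + 1" if "a \<in> S" for a unfolding c_def using elt_pos[OF AS SG] Su that by auto
  have hS: "h a < card S" if "a \<in> S" for a using h that unfolding bij_betw_def by auto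
  have crange: "\<forall>p\<in>S'. c p \<in> {1..m}" unfolding S'_def using cp hS cS by fastforce
  obtain q L R where qLR: "0 < q" "q < n" "L < n" "R < n"
    "\<forall>x\<in>S'. (x mod q + 1) * L + 1 < n \<and> R mod ((x mod q + 1) * L + 1) = c x"
    using NT[OF m _ finS' subS' cS' crange] n unfolding n_def by blast
  define eq where "eq = elt A q"
  define eL where "eL = elt A L"
  define eR where "eR = elt A R"
  have eq: "eq \<in> univ A" "pos A eq = q" unfolding eq_def using elt[OF AS SG] qLR unfolding n_def by auto
  have eL: "eL \<in> univ A" "pos A eL = L" unfolding eL_def using elt[OF AS SG] qLR unfolding n_def by auto
  have eR: "eR \<in> univ A" "pos A eR = R" unfolding eR_def using elt[OF AS SG] qLR unfolding n_def by auto
  have mn: "m < n" using NN0_ge[of m] n unfolding n_def by simp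
  have "\<forall>a\<in>S. colf (ThL A eq eL eR) m g a = colB a"
  proof
    fix a assume aS: "a \<in> S"
    have a: "a \<in> univ A" using aS Su by auto
    define j0 where "j0 = h a + 1"
    have j0m: "j0 \<in> {1..m}" unfolding j0_def using hS[OF aS] cS by auto
    have pS: "pos A a \<in> S'" unfolding S'_def using aS by simp
    have th: "ThL A eq eL eR j a \<longleftrightarrow> j = j0" if "j \<in> {1..m}" for j
    proof -
      have jn: "j < card (univ A)" using that mn unfolding n_def by auto
      have "ThL A eq eL eR j a \<longleftrightarrow> (0 < q \<and> (pos A a mod q + 1) * L + 1 < n
          \<and> R mod ((pos A a mod q + 1) * L + 1) = j)"
        using ThL_iff[OF AS SG eq(1) eL(1) eR(1) a jn] eq eL eR unfolding n_def by simp
      also have "\<dots> \<longleftrightarrow> j = j0" using qLR(1) qLR(5) pS cp[OF aS] unfolding j0_def by auto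
      finally show ?thesis .
    qed
    have ex: "\<exists>j\<in>{1..m}. ThL A eq eL eR j a" using th j0m by blast
    have L: "(LEAST j. j \<in> {1..m} \<and> ThL A eq eL eR j a) = j0"
      by (rule Least_equality) (use th j0m in auto)
    have "colf (ThL A eq eL eR) m g a = g ! j0" unfolding colf_def using ex L by simp
    also have "\<dots> = colB (inv_into S h (h a))" unfolding g_def j0_def using hS[OF aS] cS
      by (simp del: upt_Suc)
    also have "\<dots> = colB a" using h aS by (simp add: bij_betw_def)
    finally show "colf (ThL A eq eL eR) m g a = colB a" .
  qed
  then show ?thesis using gin eq eL eR by blast
qed

end

theorem theorem3p1:
  shows "\<exists>c::nat. \<forall>\<tau> k \<phi>.
     arith_sig \<tau> \<and> wf_fm (colors \<tau> k) \<phi> \<and> sentence \<phi> \<and> nnf \<phi> \<and> no_col_under_all \<phi>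
     \<longrightarrow> (\<exists>\<phi>'. wf_fm \<tau> \<phi>' \<and> sentence \<phi>'
           \<and> (\<forall>A. arith_struc \<tau> A \<longrightarrow>
                  (models A \<phi>' \<longleftrightarrow> (\<exists>B. coloring \<tau> k A B \<and> models B \<phi>)))
           \<and> \<bar>int (qr \<phi>') - int (qr \<phi>)\<bar> \<le> int c
           \<and> \<bar>int (card (bound \<phi>')) - int (card (bound \<phi>))\<bar> \<le> int c)"
proof (intro exI[of _ 9] allI impI)
  fix \<tau> k \<phi>
  assume H: "arith_sig \<tau> \<and> wf_fm (colors \<tau> k) \<phi> \<and> sentence \<phi> \<and> nnf \<phi> \<and> no_col_under_all \<phi>"
  then have SG: "arith_sig \<tau>" and WF: "wf_fm (colors \<tau> k) \<phi>" and SE: "sentence \<phi>"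
    and NNF: "nnf \<phi>" and NCA: "no_col_under_all \<phi>" by auto
  have nc: "\<forall>i. Col i \<notin> rsyms \<tau>" using SG unfolding arith_sig_def by auto
  have fr0: "free \<phi> = {}" using SE unfolding sentence_def .
  define m where "m = ncol \<phi> + 1"
  have m1: "m \<ge> 1" unfolding m_def by simp
  define V where "V = Suc (Max (insert 0 (vars_fm \<phi>)))"
  have Vb: "\<forall>y\<in>vars_fm \<phi>. y < V" unfolding V_def
    using finite_vars_fm[of \<phi>] by (auto intro!: le_imp_less_Suc Max_ge)
  have bV: "\<forall>y\<in>bound \<phi>. y < V" using Vb bound_sub_vars by blast
  define N0 where "N0 = NN0 m"
  define Gs where "Gs = List.n_lists (Suc N0) [1..<Suc k]"
  define Gl where "Gl = List.n_lists (Suc m) [1..<Suc k]"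
  define PP where "PP = {V, V+1, V+2}"
  define FS where "FS g = Fsel ths N0 g" for g
  define FL where "FL g = Fsel (thl V) m g" for g
  define Sk where "Sk = Conj Fls (rc (\<lambda>_ _. Fls) \<phi>)"
  define SmallD where "SmallD = Disjs (map (\<lambda>g. rc (FS g) \<phi>) Gs)"
  define LargeD where "LargeD = Disjs (map (\<lambda>g. Ex V (Ex (V+1) (Ex (V+2) (rc (FL g) \<phi>)))) Gl)"
  define \<phi>' where "\<phi>' = Disj Sk (Disj SmallD LargeD)"

  have FSsyn: "free (FS g i t) \<subseteq> vars_trm t \<union> {}" "bound (FS g i t) \<subseteq> {}" "qr (FS g i t) \<le> 0" for g i t
    unfolding FS_def using Fsel_syn[of ths t "vars_trm t" "{}" 0] ths_syn by auto
  have FLsyn: "free (FL g i t) \<subseteq> vars_trm t \<union> PP" "bound (FL g i t) \<subseteq> {V..<V+9}" "qr (FL g i t) \<le> 6" for g i t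
    unfolding FL_def PP_def using Fsel_syn[of "thl V" t "vars_trm t \<union> {V, V+1, V+2}" "{V..<V+9}" 6] thl_free thl_bound thl_qr
    by auto

  have wfS: "wf_fm \<tau> (rc F \<phi>)" if "\<forall>i t. wf_trm \<tau> t \<longrightarrow> wf_fm \<tau> (F i t)" for F
    using wf_rc[OF WF that] .
  have w1: "wf_fm \<tau> Sk" unfolding Sk_def using wf_Tru(2)[OF SG] wfS[of "\<lambda>_ _. Fls"] by simp
  have w2: "wf_fm \<tau> SmallD" unfolding SmallD_def FS_def
    by (rule wf_Disjs[OF SG]) (auto intro!: wfS Fsel_wf[OF SG] ths_wf[OF SG])
  have w3: "wf_fm \<tau> LargeD" unfolding LargeD_def FL_def
    by (rule wf_Disjs[OF SG]) (auto intro!: wfS Fsel_wf[OF SG] thl_wf[OF SG])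
  have wf': "wf_fm \<tau> \<phi>'" unfolding \<phi>'_def using w1 w2 w3 by simp

  have f1: "free Sk = {}"
  proof -
    have "free (rc (\<lambda>_ _. Fls) \<phi>) \<subseteq> free \<phi> \<union> {}" by (rule free_rc[OF WF]) auto
    then show ?thesis unfolding Sk_def using fr0 by simp
  qed
  have f2: "free SmallD = {}"
  proof -
    have "free (rc (FS g) \<phi>) \<subseteq> free \<phi> \<union> {}" for g by (rule free_rc[OF WF]) (use FSsyn in auto)
    then show ?thesis unfolding SmallD_def using fr0 by auto
  qed
  have f3: "free LargeD = {}"
  proof -
    have PPb: "PP \<inter> bound \<phi> = {}" unfolding PP_def using bV by auto
    have "free (rc (FL g) \<phi>) \<subseteq> free \<phi> \<union> PP" for g by (rule free_rc[OF WF]) (use FLsyn PPb in auto)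
    then show ?thesis unfolding LargeD_def using fr0 unfolding PP_def by auto
  qed
  have se': "sentence \<phi>'" unfolding sentence_def \<phi>'_def using f1 f2 f3 by simp

  have q1: "qr Sk = qr \<phi>"
  proof -
    have "qr (rc (\<lambda>_ _. Fls) \<phi>) \<le> qr \<phi> + 0" by (rule qr_rc) simp
    then show ?thesis unfolding Sk_def using qr_rc_ge[of \<phi> "\<lambda>_ _. Fls"] by simp
  qed
  have q2: "qr SmallD \<le> qr \<phi>"
  proof -
    have "qr (rc (FS g) \<phi>) \<le> qr \<phi> + 0" for g by (rule qr_rc) (use FSsyn in auto)
    then show ?thesis unfolding SmallD_def by (intro qr_Disjs) auto
  qed
  have q3: "qr LargeD \<le> qr \<phi> + 9"
  proof -
    have h: "qr (rc (FL g) \<phi>) \<le> qr \<phi> + 6" for g by (rule qr_rc) (use FLsyn in auto)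
    have "qr (Ex V (Ex (V+1) (Ex (V+2) (rc (FL g) \<phi>)))) \<le> qr \<phi> + 9" for g using h[of g] by simp
    then show ?thesis unfolding LargeD_def by (intro qr_Disjs) auto
  qed
  have qr': "qr \<phi> \<le> qr \<phi>' \<and> qr \<phi>' \<le> qr \<phi> + 9" unfolding \<phi>'_def using q1 q2 q3 by simp

  have b1: "bound Sk = bound \<phi>"
  proof -
    have "bound (rc (\<lambda>_ _. Fls) \<phi>) \<subseteq> bound \<phi> \<union> {}" by (rule bound_rc) simp
    then show ?thesis unfolding Sk_def using bound_rc_ge[of \<phi> "\<lambda>_ _. Fls"] by simp
  qed
  have b2: "bound SmallD \<subseteq> bound \<phi>"
  proof -
    have "bound (rc (FS g) \<phi>) \<subseteq> bound \<phi> \<union> {}" for g by (rule bound_rc) (use FSsyn in auto)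
    then show ?thesis unfolding SmallD_def by auto
  qed
  have b3: "bound LargeD \<subseteq> bound \<phi> \<union> {V..<V+9}"
  proof -
    have "bound (rc (FL g) \<phi>) \<subseteq> bound \<phi> \<union> {V..<V+9}" for g by (rule bound_rc) (use FLsyn in auto)
    then show ?thesis unfolding LargeD_def by auto
  qed
  have bsub: "bound \<phi> \<subseteq> bound \<phi>'" "bound \<phi>' \<subseteq> bound \<phi> \<union> {V..<V+9}"
    unfolding \<phi>'_def using b1 b2 b3 by auto
  have cb: "card (bound \<phi>) \<le> card (bound \<phi>') \<and> card (bound \<phi>') \<le> card (bound \<phi>) + 9"
  proof
    show "card (bound \<phi>) \<le> card (bound \<phi>')" using bsub(1) finite_bound by (rule card_mono[rotated])
    have "card (bound \<phi>') \<le> card (bound \<phi> \<union> {V..<V+9})"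
      using bsub(2) finite_bound by (intro card_mono) auto
    also have "\<dots> \<le> card (bound \<phi>) + card {V..<V+9}" by (rule card_Un_le)
    finally show "card (bound \<phi>') \<le> card (bound \<phi>) + 9" by simp
  qed

  have sem: "models A \<phi>' \<longleftrightarrow> (\<exists>B. coloring \<tau> k A B \<and> models B \<phi>)" if AS: "arith_struc \<tau> A" for A
  proof -
    have A: "is_struc \<tau> A" using is_str[OF AS SG] .
    obtain a0 where a0: "a0 \<in> univ A" using neU[OF AS SG] by blast
    define s0 :: "nat \<Rightarrow> nat" where "s0 = (\<lambda>_. a0)"
    have s0u: "\<forall>x. s0 x \<in> univ A" unfolding s0_def using a0 by simp
    have FS_ok: "sat A s (FS g i t) = (colf (\<lambda>j x. x = numv A (j - 1)) N0 g (eval A s t) = i)" for g i t s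
      unfolding FS_def by (rule sat_Fsel) (simp add: sat_ths)
    have FL_ok: "sat A s (FL g i t) = (colf (ThL A q L R) m g (eval A s t) = i)"
      if "s V = q" "s (V+1) = L" "s (V+2) = R" "\<forall>y\<in>vars_trm t. y < V" for g i t s q L R
      unfolding FL_def by (rule sat_Fsel) (use that in \<open>simp add: sat_thl\<close>)
    show ?thesis
    proof
      assume "models A \<phi>'"
      then have "sat A s0 \<phi>'" unfolding models_def using s0u by blast
      then have "sat A s0 SmallD \<or> sat A s0 LargeD" unfolding \<phi>'_def Sk_def by simp
      then show "\<exists>B. coloring \<tau> k A B \<and> models B \<phi>"
      proof
        assume "sat A s0 SmallD"
        then obtain g where g: "g \<in> set Gs" "sat A s0 (rc (FS g) \<phi>)" unfolding SmallD_def by auto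
        show ?thesis
        proof (rule sound_generic[OF SG A WF SE Vb, of "{}" s0 "FS g" "colf (\<lambda>j x. x = numv A (j - 1)) N0 g"])
          show "\<forall>a\<in>univ A. colf (\<lambda>j x. x = numv A (j - 1)) N0 g a \<in> {1..k}"
            using colf_range g(1) unfolding Gs_def by blast
        qed (use g FS_ok in auto)
      next
        assume "sat A s0 LargeD"
        then obtain g where g: "g \<in> set Gl" "sat A s0 (Ex V (Ex (V+1) (Ex (V+2) (rc (FL g) \<phi>))))"
          unfolding LargeD_def by auto
        then obtain q L R where qLR: "q \<in> univ A" "L \<in> univ A" "R \<in> univ A"
          "sat A (s0(V:=q, V+1:=L, V+2:=R)) (rc (FL g) \<phi>)" by auto
        define s1 where "s1 = s0(V:=q, V+1:=L, V+2:=R)"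
        have s1v: "s1 V = q" "s1 (V+1) = L" "s1 (V+2) = R" unfolding s1_def by simp_all
        show ?thesis
        proof (rule sound_generic[OF SG A WF SE Vb, of PP s1 "FL g" "colf (ThL A q L R) m g"])
          show "\<forall>a\<in>univ A. colf (ThL A q L R) m g a \<in> {1..k}"
            using colf_range g(1) unfolding Gl_def by blast
          show "\<forall>v\<in>PP. V \<le> v" unfolding PP_def by simp
          show "sat A s1 (rc (FL g) \<phi>)" using qLR(4) unfolding s1_def .
          fix i t s assume "\<forall>v\<in>PP. s v = s1 v" "\<forall>y\<in>vars_trm t. y < V"
          then show "sat A s (FL g i t) = (colf (ThL A q L R) m g (eval A s t) = i)"
            using FL_ok[of s q L R t g i] s1v unfolding PP_def by simp
        qed
      qed
    next
      assume "\<exists>B. coloring \<tau> k A B \<and> models B \<phi>"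
      then obtain B where B: "coloring \<tau> k A B" "models B \<phi>" by blast
      have uB: "univ B = univ A" using B(1) unfolding coloring_def by simp
      have satB: "sat B s0 \<phi>" using B(2) s0u uB unfolding models_def by simp
      obtain S where S: "finite S" "S \<subseteq> univ A" "card S \<le> ncol \<phi>"
        "\<forall>col. (\<forall>x\<in>S. \<forall>i\<in>{1..k}. rint B (Col i) [x] \<longleftrightarrow> col x = i) \<longrightarrow> sat (colstruc A col) s0 \<phi>"
        using support[OF B(1) A nc NNF NCA WF s0u satB] by blast
      define colB where "colB x = (THE i. i \<in> {1..k} \<and> rint B (Col i) [x])" for x
      have colB: "colB a \<in> {1..k} \<and> (\<forall>i\<in>{1..k}. rint B (Col i) [a] \<longleftrightarrow> colB a = i)" if "a \<in> univ A" for a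
      proof -
        have ex1: "\<exists>!i. i \<in> {1..k} \<and> rint B (Col i) [a]" using B(1) that unfolding coloring_def by blast
        then have "colB a \<in> {1..k} \<and> rint B (Col (colB a)) [a]"
          unfolding colB_def by (rule theI')
        then show ?thesis using ex1 by blast
      qed
      have colBr: "\<forall>a\<in>univ A. colB a \<in> {1..k}" using colB by blast
      have agree: "sat (colstruc A col) s0 \<phi>" if "\<forall>x\<in>S. col x = colB x" for col
        using S(4) that colB S(2) by (metis subsetD)
      have "sat A s0 \<phi>'"
      proof (cases "card (univ A) \<le> N0")
        case True
        obtain g where g: "g \<in> set Gs" "\<forall>a\<in>univ A. colf (\<lambda>j x. x = numv A (j - 1)) N0 g a = colB a"
          using complete_small[OF AS SG True colBr] unfolding Gs_def by blast
        have "sat (colstruc A (colf (\<lambda>j x. x = numv A (j - 1)) N0 g)) s0 \<phi>"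
          using agree g(2) S(2) by blast
        moreover have "sat A s0 (rc (FS g) \<phi>) = sat (colstruc A (colf (\<lambda>j x. x = numv A (j - 1)) N0 g)) s0 \<phi>"
          by (rule sat_rc[where P = "{}" and s0 = s0 and V = V]) (use FS_ok WF Vb in auto)
        ultimately have "sat A s0 SmallD" unfolding SmallD_def using g(1) by auto
        then show ?thesis unfolding \<phi>'_def by simp
      next
        case False
        then have nbig: "NN0 m < card (univ A)" unfolding N0_def by simp
        have cS: "card S \<le> m" using S(3) unfolding m_def by simp
        obtain g q L R where g: "g \<in> set Gl" "q \<in> univ A" "L \<in> univ A" "R \<in> univ A"
          "\<forall>a\<in>S. colf (ThL A q L R) m g a = colB a"
          using complete_large[OF AS SG m1 nbig S(1) S(2) cS colBr] unfolding Gl_def by blast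
        define col where "col = colf (ThL A q L R) m g"
        define s1 where "s1 = s0(V:=q, V+1:=L, V+2:=R)"
        have s1v: "s1 V = q" "s1 (V+1) = L" "s1 (V+2) = R" unfolding s1_def by simp_all
        have "sat (colstruc A col) s0 \<phi>" using agree g(5) unfolding col_def by blast
        then have c1: "sat (colstruc A col) s1 \<phi>" using sat_cong[of \<phi> s0 s1] fr0 by simp
        have "sat A s1 (rc (FL g) \<phi>) = sat (colstruc A col) s1 \<phi>"
        proof (rule sat_rc[where P = PP and s0 = s1 and V = V])
          fix i t s assume "\<forall>v\<in>PP. s v = s1 v" "\<forall>y\<in>vars_trm t. y < V"
          then show "sat A s (FL g i t) = (col (eval A s t) = i)"
            using FL_ok[of s q L R t g i] s1v unfolding PP_def col_def by simp
        qed (use WF Vb in \<open>auto simp: PP_def\<close>)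
        then have "sat A s1 (rc (FL g) \<phi>)" using c1 by simp
        then have "sat A s0 (Ex V (Ex (V+1) (Ex (V+2) (rc (FL g) \<phi>))))"
          using g(2,3,4) unfolding s1_def by auto
        then have "sat A s0 LargeD" unfolding LargeD_def using g(1) by auto
        then show ?thesis unfolding \<phi>'_def by simp
      qed
      then show "models A \<phi>'" unfolding models_def using sat_cong[of \<phi>' s0] se'
        unfolding sentence_def by blast
    qed
  qed

  show "\<exists>\<phi>'. wf_fm \<tau> \<phi>' \<and> sentence \<phi>'
           \<and> (\<forall>A. arith_struc \<tau> A \<longrightarrow>
                  (models A \<phi>' \<longleftrightarrow> (\<exists>B. coloring \<tau> k A B \<and> models B \<phi>)))
           \<and> \<bar>int (qr \<phi>') - int (qr \<phi>)\<bar> \<le> int 9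
           \<and> \<bar>int (card (bound \<phi>')) - int (card (bound \<phi>))\<bar> \<le> int 9"
    using wf' se' sem qr' cb by (intro exI[of _ \<phi>']) auto
qed

end
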